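(* Let $\epsilon=(\epsilon_1,\epsilon_2)\in[0,\infty)^2$ and $1\le p\le\infty$. Let $\epsilon^*=(\epsilon_1^*,\epsilon_2^* )$ with $\epsilon_1^*=\epsilon_2^*=(1+\epsilon_1)(1+\epsilon_2)-1=\epsilon_1+\epsilon_2+\epsilon_1\epsilon_2$. Let $X,Y,Z$ be compact pmm-spaces. Then \[ \mathsf{sPGW}_{\epsilon^*,p}(X,Z)\le(1+\epsilon_2)^{2/p}\,\mathsf{sPGW}_{\epsilon,p}(X,Y)+(1+\epsilon_1)^{2/p}\,\mathsf{sPGW}_{\epsilon,p}(Y,Z), \] where $(1+\epsilon_i)^{2/\infty}=1$.
   Context: A pmm-space is a triple $(X,d_X,\mu_X)$ with $(X,d_X)$ a complete separable metric space and $\mu_X$ a Borel probability measure; compact means $(X,d_X)$ compact. For a measure $\pi$ on $X\times Y$, $\pi_X,\pi_Y$ are its marginals. For $p<\infty$, $\|d_X-d_Y\|_{L^p(\pi\otimes\pi)}=\left(\iint|d_X(x,x')-d_Y(y,y')|^p\,d\pi(x,y)\,d\pi(x',y')\right)^{1/p}$; for $p=\infty$ it is the $\pi\otimes\pi$-essential supremum. For $\epsilon=(\epsilon_1,\epsilon_2)$, $\mathcal{S}_\epsilon(\mu_X,\mu_Y)$ is the set of Borel probability measures $\pi$ on $X\times Y$ with $\pi_X,\mu_X$ mutually absolutely continuous and $\|d\pi_X/d\mu_X\|_{L^\infty(\mu_X)},\|d\mu_X/d\pi_X\|_{L^\infty(\pi_X)}\le1+\epsilon_1$, and $\pi_Y,\mu_Y$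 mutually absolutely continuous with $\|d\pi_Y/d\mu_Y\|_{L^\infty(\mu_Y)},\|d\mu_Y/d\pi_Y\|_{L^\infty(\pi_Y)}\le1+\epsilon_2$. $\mathsf{sPGW}_{\epsilon,p}(X,Y)=\inf_{\pi\in\mathcal{S}_\epsilon(\mu_X,\mu_Y)}\|d_X-d_Y\|_{L^p(\pi\otimes\pi)}$. *)

theory Defs
  imports "HOL-Probability.Probability"
begin

text \<open>A compact pmm-space: the metric space is the type 'a itself (metric dist),
  compact, carrying a Borel probability measure.\<close>
definition compact_pmm :: "'a::metric_space measure \<Rightarrow> bool" where
  "compact_pmm \<mu> \<longleftrightarrow> compact (UNIV :: 'a set) \<and> prob_space \<mu> \<and> sets \<mu> = sets borel"

definition mutual_bdd :: "'a measure \<Rightarrow> 'a measure \<Rightarrow> real \<Rightarrow> bool" where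
  "mutual_bdd \<nu> \<mu> e \<longleftrightarrow>
     absolutely_continuous \<mu> \<nu> \<and> absolutely_continuous \<nu> \<mu> \<and>
     (AE x in \<mu>. RN_deriv \<mu> \<nu> x \<le> ennreal (1 + e)) \<and>
     (AE x in \<nu>. RN_deriv \<nu> \<mu> x \<le> ennreal (1 + e))"

definition sS :: "real \<Rightarrow> real \<Rightarrow> 'a::topological_space measure \<Rightarrow> 'b::topological_space measure
    \<Rightarrow> ('a \<times> 'b) measure set" where
  "sS e1 e2 \<mu> \<nu> = {\<pi>. prob_space \<pi> \<and> sets \<pi> = sets borel \<and>
      mutual_bdd (distr \<pi> borel fst) \<mu> e1 \<and> mutual_bdd (distr \<pi> borel snd) \<nu> e2}"

definition distortion :: "('a::metric_space \<times> 'b::metric_space) \<times> ('a \<times> 'b) \<Rightarrow> real" where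
  "distortion z = \<bar>dist (fst (fst z)) (fst (snd z)) - dist (snd (fst z)) (snd (snd z))\<bar>"

text \<open>L^p norm of the distortion w.r.t. pi (x) pi, for p in [1, infinity].
  (Finite for compact spaces, hence stated as a real number.)\<close>
definition dis_norm :: "ennreal \<Rightarrow> ('a::metric_space \<times> 'b::metric_space) measure \<Rightarrow> real" where
  "dis_norm p \<pi> =
     (if p = \<top> then real_of_ereal (esssup (\<pi> \<Otimes>\<^sub>M \<pi>) (\<lambda>z. ereal (distortion z)))
      else (enn2real (\<integral>\<^sup>+ z. ennreal (distortion z powr enn2real p) \<partial>(\<pi> \<Otimes>\<^sub>M \<pi>)))
             powr (1 / enn2real p))"

definition sPGW :: "real \<Rightarrow> real \<Rightarrow> ennreal \<Rightarrow> 'a::metric_space measure \<Rightarrow> 'b::metric_space measure \<Rightarrow> real" where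
  "sPGW e1 e2 p \<mu> \<nu> = Inf (dis_norm p ` sS e1 e2 \<mu> \<nu>)"

definition pfactor :: "ennreal \<Rightarrow> real \<Rightarrow> real" where
  "pfactor p e = (if p = \<top> then 1 else (1 + e) powr (2 / enn2real p))"

end

theory Submission
  imports Defs "HOL-Probability.Probability"
begin

lemma compact_countable_base:
  assumes "compact (UNIV::'a::metric_space set)"
  shows "\<exists>BB::'a set set. countable BB \<and> (\<forall>b\<in>BB. open b) \<and>
           (\<forall>S x. open S \<longrightarrow> x \<in> S \<longrightarrow> (\<exists>b\<in>BB. x \<in> b \<and> b \<subseteq> S))"
proof -
  have "\<forall>n::nat. \<exists>k. finite k \<and> (UNIV::'a set) \<subseteq> (\<Union>x\<in>k. ball x (1 / Suc n))"
    using compact_eq_totally_bounded[of "UNIV::'a set"] assms by simp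
  then obtain F where F: "\<And>n. finite (F n)" "\<And>n. (UNIV::'a set) \<subseteq> (\<Union>x\<in>F n. ball x (1 / Suc n))"
    by metis
  define BB where "BB = (\<Union>n. (\<lambda>x. ball x (1 / Suc n)) ` F n)"
  have "countable BB" unfolding BB_def using F(1) by (intro countable_UN[OF countableI_type] countable_image countable_finite) auto
  moreover have "\<forall>b\<in>BB. open b" unfolding BB_def by auto
  moreover have "\<exists>b\<in>BB. x \<in> b \<and> b \<subseteq> S" if oS: "open S" and xS: "x \<in> S" for S x
  proof -
    obtain e where e: "e > 0" "ball x e \<subseteq> S" using oS xS by (meson open_contains_ball)
    obtain n::nat where n: "2 / Suc n < e"
    proof -
      obtain n::nat where "2 / e < n" using reals_Archimedean2 by blast
      then have "2 / e < real (Suc n)" by simp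
      then have "2 < real (Suc n) * e" using e(1) by (simp add: divide_less_eq)
      then have "2 / Suc n < e" by (simp add: divide_less_eq mult.commute)
      then show ?thesis using that by blast
    qed
    obtain c where c: "c \<in> F n" "x \<in> ball c (1 / Suc n)" using F(2)[of n] by blast
    have "ball c (1 / Suc n) \<subseteq> S"
    proof
      fix y assume "y \<in> ball c (1 / Suc n)"
      then have "dist c y < 1 / Suc n" by simp
      moreover have "dist x c < 1 / Suc n" using c(2) by (simp add: dist_commute)
      moreover have "dist x y \<le> dist x c + dist c y" by (rule dist_triangle)
      moreover have "1 / real (Suc n) + 1 / Suc n = 2 / Suc n" by (simp add: field_simps)
      ultimately have "dist x y < e" using n by linarith
      then show "y \<in> S" using e(2) by auto
    qed
    moreover have "ball c (1 / Suc n) \<in> BB" unfolding BB_def using c(1) by blast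
    ultimately show ?thesis using c(2) by blast
  qed
  ultimately show ?thesis by (intro exI[of _ BB]) blast
qed

lemma sets_borel_prod_compact:
  assumes "compact (UNIV::'a::metric_space set)" "compact (UNIV::'b::metric_space set)"
  shows "sets (borel \<Otimes>\<^sub>M borel :: ('a \<times> 'b) measure) = sets borel"
proof
  show "sets (borel \<Otimes>\<^sub>M borel :: ('a \<times> 'b) measure) \<subseteq> sets borel"
  proof (rule sets_pair_in_sets)
    fix a :: "'a set" and b :: "'b set" assume "a \<in> sets borel" "b \<in> sets borel"
    moreover have "fst \<in> borel_measurable (borel :: ('a \<times> 'b) measure)"
      by (intro borel_measurable_continuous_onI continuous_intros)
    moreover have "snd \<in> borel_measurable (borel :: ('a \<times> 'b) measure)"
      by (intro borel_measurable_continuous_onI continuous_intros)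
    ultimately have "fst -` a \<inter> snd -` b \<in> sets (borel :: ('a \<times> 'b) measure)"
      by (metis measurable_sets sets.Int space_borel inf_top.right_neutral)
    moreover have "a \<times> b = fst -` a \<inter> snd -` b" by auto
    ultimately show "a \<times> b \<in> sets borel" by simp
  qed
next
  obtain BA :: "'a set set" where BA: "countable BA" "\<forall>b\<in>BA. open b"
     "\<forall>S x. open S \<longrightarrow> x \<in> S \<longrightarrow> (\<exists>b\<in>BA. x \<in> b \<and> b \<subseteq> S)"
    using compact_countable_base[OF assms(1)] by blast
  obtain BB :: "'b set set" where BB: "countable BB" "\<forall>b\<in>BB. open b"
     "\<forall>S x. open S \<longrightarrow> x \<in> S \<longrightarrow> (\<exists>b\<in>BB. x \<in> b \<and> b \<subseteq> S)"
    using compact_countable_base[OF assms(2)] by blast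
  show "sets borel \<subseteq> sets (borel \<Otimes>\<^sub>M borel :: ('a \<times> 'b) measure)"
  proof -
    have sp: "space (borel \<Otimes>\<^sub>M borel :: ('a \<times> 'b) measure) = UNIV" by (simp add: space_pair_measure)
    have "Collect open \<subseteq> sets (borel \<Otimes>\<^sub>M borel :: ('a \<times> 'b) measure)"
    proof
      fix S :: "('a \<times> 'b) set" assume "S \<in> Collect open"
      then have S: "open S" by simp
      define R where "R = {r \<in> (\<lambda>(a,b). a \<times> b) ` (BA \<times> BB). r \<subseteq> S}"
      have "countable R" unfolding R_def using BA(1) BB(1) by (intro countable_Collect countable_image) auto
      have "S = \<Union>R"
      proof
        show "S \<subseteq> \<Union>R"
        proof
          fix z assume "z \<in> S"
          obtain A0 B0 where AB: "open A0" "open B0" "z \<in> A0 \<times> B0" "A0 \<times> B0 \<subseteq> S"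
            by (rule open_prod_elim[OF S \<open>z \<in> S\<close>])
          then have "fst z \<in> A0" "snd z \<in> B0" by (auto simp: mem_Times_iff)
          with AB obtain a b where "a \<in> BA" "fst z \<in> a" "a \<subseteq> A0" "b \<in> BB" "snd z \<in> b" "b \<subseteq> B0"
            using BA(3) BB(3) by meson
          then show "z \<in> \<Union>R" unfolding R_def using \<open>A0 \<times> B0 \<subseteq> S\<close>
            by (intro UnionI[of "a \<times> b"]) (auto simp: mem_Times_iff)
        qed
      qed (auto simp: R_def)
      moreover have "r \<in> sets (borel \<Otimes>\<^sub>M borel :: ('a \<times> 'b) measure)" if "r \<in> R" for r
        using that BA(2) BB(2) unfolding R_def by auto
      ultimately show "S \<in> sets (borel \<Otimes>\<^sub>M borel :: ('a \<times> 'b) measure)"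
        using \<open>countable R\<close> by (metis sets.countable_Union subsetI)
    qed
    from sets.sigma_sets_subset[OF this] sp show ?thesis by (simp add: sets_borel)
  qed
qed


lemma mutual_bdd_D:
  assumes mb: "mutual_bdd \<nu> \<mu> e" and fm: "finite_measure \<mu>" "finite_measure \<nu>"
    and se: "sets \<nu> = sets \<mu>" and A: "A \<in> sets \<mu>"
  shows "emeasure \<nu> A \<le> ennreal (1 + e) * emeasure \<mu> A"
    and "emeasure \<mu> A \<le> ennreal (1 + e) * emeasure \<nu> A"
proof -
  have gen: "emeasure N A \<le> ennreal (1 + e) * emeasure M A"
    if "finite_measure M" "sets N = sets M" "A \<in> sets M" "absolutely_continuous M N"
       "AE x in M. RN_deriv M N x \<le> ennreal (1 + e)" for M N :: "'a measure"
  proof -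
    interpret M: finite_measure M by fact
    have "N = density M (RN_deriv M N)"
      using M.density_RN_deriv that by metis
    then have "emeasure N A = (\<integral>\<^sup>+ x. RN_deriv M N x * indicator A x \<partial>M)"
      using that by (metis borel_measurable_RN_deriv emeasure_density)
    also have "\<dots> \<le> (\<integral>\<^sup>+ x. ennreal (1 + e) * indicator A x \<partial>M)"
      using that(5) by (intro nn_integral_mono_AE) (auto elim!: eventually_mono intro: mult_right_mono)
    also have "\<dots> = ennreal (1 + e) * emeasure M A"
      using that(3) by (simp add: nn_integral_cmult_indicator)
    finally show ?thesis .
  qed
  show "emeasure \<nu> A \<le> ennreal (1 + e) * emeasure \<mu> A"
    using gen[OF fm(1) se A] mb unfolding mutual_bdd_def by blast
  show "emeasure \<mu> A \<le> ennreal (1 + e) * emeasure \<nu> A"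
    using gen[OF fm(2) se[symmetric]] A se mb unfolding mutual_bdd_def by auto
qed

lemma RN_bound_I:
  assumes fm: "finite_measure M" "finite_measure N" and se: "sets N = sets M"
    and ac: "absolutely_continuous M N" and c: "0 \<le> c"
    and le: "\<And>A. A \<in> sets M \<Longrightarrow> emeasure N A \<le> ennreal c * emeasure M A"
  shows "AE x in M. RN_deriv M N x \<le> ennreal c"
proof -
  interpret M: finite_measure M by fact
  define f where "f = RN_deriv M N"
  have fm[measurable]: "f \<in> borel_measurable M" unfolding f_def by simp
  have Nd: "N = density M f"
    unfolding f_def using M.density_RN_deriv ac se by metis
  define S where "S = {x \<in> space M. ennreal c < f x}"
  have S[measurable]: "S \<in> sets M" unfolding S_def by measurable
  have "AE x in M. f x * indicator S x \<le> ennreal c * indicator S x"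
  proof (rule ccontr)
    assume nae: "\<not> (AE x in M. f x * indicator S x \<le> ennreal c * indicator S x)"
    have "(\<integral>\<^sup>+ x. ennreal c * indicator S x \<partial>M) < (\<integral>\<^sup>+ x. f x * indicator S x \<partial>M)"
    proof (rule nn_integral_less)
      show "(\<integral>\<^sup>+ x. ennreal c * indicator S x \<partial>M) \<noteq> \<infinity>"
        using S by (simp add: nn_integral_cmult_indicator ennreal_mult_eq_top_iff M.emeasure_real)
      show "AE x in M. ennreal c * indicator S x \<le> f x * indicator S x"
        by (intro AE_I2) (auto simp: S_def indicator_def less_imp_le)
    qed (use nae in auto)
    also have "\<dots> = emeasure N S"
      using S Nd by (simp add: emeasure_density)
    also have "\<dots> \<le> ennreal c * emeasure M S" using le S by blast
    also have "\<dots> = (\<integral>\<^sup>+ x. ennreal c * indicator S x \<partial>M)"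
      using S by (simp add: nn_integral_cmult_indicator)
    finally show False by simp
  qed
  then show ?thesis using AE_space
  proof eventually_elim
    case (elim x)
    show ?case
    proof (rule ccontr)
      assume "\<not> RN_deriv M N x \<le> ennreal c"
      then have xS: "x \<in> S" using elim(2) unfolding S_def f_def by (auto simp: not_le)
      then have "f x \<le> ennreal c" using elim(1) by simp
      then show False using xS unfolding S_def by auto
    qed
  qed
qed

lemma mutual_bdd_I:
  assumes fm: "finite_measure \<mu>" "finite_measure \<nu>" and se: "sets \<nu> = sets \<mu>"
    and c: "1 \<le> c"
    and le1: "\<And>A. A \<in> sets \<mu> \<Longrightarrow> emeasure \<nu> A \<le> ennreal c * emeasure \<mu> A"
    and le2: "\<And>A. A \<in> sets \<mu> \<Longrightarrow> emeasure \<mu> A \<le> ennreal c * emeasure \<nu> A"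
  shows "mutual_bdd \<nu> \<mu> (c - 1)"
proof -
  have ac1: "absolutely_continuous \<mu> \<nu>"
    unfolding absolutely_continuous_def
  proof
    fix A assume "A \<in> null_sets \<mu>"
    then show "A \<in> null_sets \<nu>" using le1[of A] se by (auto simp: null_sets_def)
  qed
  have ac2: "absolutely_continuous \<nu> \<mu>"
    unfolding absolutely_continuous_def
  proof
    fix A assume "A \<in> null_sets \<nu>"
    then show "A \<in> null_sets \<mu>" using le2[of A] se by (auto simp: null_sets_def)
  qed
  have "AE x in \<mu>. RN_deriv \<mu> \<nu> x \<le> ennreal c"
    using RN_bound_I[OF fm se ac1] le1 c by auto
  moreover have "AE x in \<nu>. RN_deriv \<nu> \<mu> x \<le> ennreal c"
    using RN_bound_I[OF fm(2,1) se[symmetric] ac2] le2 c se by auto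
  ultimately show ?thesis
    unfolding mutual_bdd_def using ac1 ac2 by simp
qed


lemma compact_partition:
  fixes \<delta> :: real
  assumes cpt: "compact (UNIV::'b::metric_space set)" and d: "\<delta> > 0"
  shows "\<exists>(n::nat) (B::nat \<Rightarrow> 'b set). (\<forall>i. B i \<in> sets borel) \<and>
   (\<forall>i j. i \<noteq> j \<longrightarrow> B i \<inter> B j = {}) \<and>
   (\<forall>y. \<exists>i<n. y \<in> B i) \<and> (\<forall>i. n \<le> i \<longrightarrow> B i = {}) \<and>
   (\<forall>i y y'. y \<in> B i \<longrightarrow> y' \<in> B i \<longrightarrow> dist y y' \<le> \<delta>)"
proof -
  obtain k where k: "finite k" "(UNIV::'b set) \<subseteq> (\<Union>x\<in>k. ball x (\<delta>/2))"
    using compact_eq_totally_bounded[of "UNIV::'b set"] cpt d by (metis half_gt_zero)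
  obtain xs where xs: "set xs = k" using finite_list[OF k(1)] by blast
  define n where "n = length xs"
  define B where "B i = (if i < n then ball (xs!i) (\<delta>/2) - (\<Union>j<i. ball (xs!j) (\<delta>/2)) else {})" for i
  have b1: "B i \<in> sets borel" for i unfolding B_def by auto
  have b2: "B i \<inter> B j = {}" if "i \<noteq> j" for i j
  proof -
    have *: "B i \<inter> B j = {}" if "i < j" for i j
      using that unfolding B_def by auto
    show ?thesis using that *[of i j] *[of j i] by (cases "i < j") auto
  qed
  have b3: "\<exists>i<n. y \<in> B i" for y
  proof -
    have ex: "\<exists>i. i < n \<and> y \<in> ball (xs!i) (\<delta>/2)"
    proof -
      obtain x where "x \<in> k" "y \<in> ball x (\<delta>/2)" using k(2) by blast
      then obtain i where "i < length xs" "xs!i = x" using xs by (auto simp: in_set_conv_nth)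
      then show ?thesis using \<open>y \<in> ball x (\<delta>/2)\<close> unfolding n_def by blast
    qed
    define i where "i = (LEAST i. i < n \<and> y \<in> ball (xs!i) (\<delta>/2))"
    have i: "i < n" "y \<in> ball (xs!i) (\<delta>/2)"
      using LeastI_ex[OF ex] unfolding i_def by auto
    have "\<not> (j < n \<and> y \<in> ball (xs!j) (\<delta>/2))" if "j < i" for j
      using not_less_Least[OF that[unfolded i_def]] .
    then have "y \<in> B i" using i unfolding B_def by auto
    then show ?thesis using i by blast
  qed
  have b4: "B i = {}" if "n \<le> i" for i using that unfolding B_def by auto
  have b5: "dist y y' \<le> \<delta>" if "y \<in> B i" "y' \<in> B i" for i y y'
  proof -
    have "y \<in> ball (xs!i) (\<delta>/2)" "y' \<in> ball (xs!i) (\<delta>/2)"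
      using that unfolding B_def by (auto split: if_splits)
    then have "dist (xs!i) y < \<delta>/2" "dist (xs!i) y' < \<delta>/2" by auto
    moreover have "dist y y' \<le> dist (xs!i) y + dist (xs!i) y'" by (rule dist_triangle3)
    ultimately show ?thesis by linarith
  qed
  show ?thesis using b1 b2 b3 b4 b5 by blast
qed


lemma cont_meas: "sets M = sets borel \<Longrightarrow> continuous_on UNIV f \<Longrightarrow> f \<in> borel_measurable M"
  using measurable_cong_sets[of M borel borel borel] borel_measurable_continuous_onI by blast

lemma real_bounds_from_mb:
  assumes mb: "mutual_bdd \<nu> \<mu> e" and p: "prob_space \<nu>" "prob_space \<mu>" and se: "sets \<nu> = sets \<mu>"
    and A: "A \<in> sets \<mu>" and e: "0 \<le> e"
  shows "measure \<nu> A \<le> (1 + e) * measure \<mu> A" "measure \<mu> A \<le> (1 + e) * measure \<nu> A"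
proof -
  interpret n: prob_space \<nu> by fact
  interpret m: prob_space \<mu> by fact
  have f: "finite_measure \<mu>" "finite_measure \<nu>" by unfold_locales
  have A': "A \<in> sets \<nu>" using A se by simp
  have "ennreal (measure \<nu> A) \<le> ennreal ((1 + e) * measure \<mu> A)"
    using mutual_bdd_D(1)[OF mb f se A] e
    by (simp add: n.emeasure_eq_measure m.emeasure_eq_measure ennreal_mult)
  then show "measure \<nu> A \<le> (1 + e) * measure \<mu> A"
    using e by (subst (asm) ennreal_le_iff) auto
  have "ennreal (measure \<mu> A) \<le> ennreal ((1 + e) * measure \<nu> A)"
    using mutual_bdd_D(2)[OF mb f se A] e
    by (simp add: n.emeasure_eq_measure m.emeasure_eq_measure ennreal_mult)
  then show "measure \<mu> A \<le> (1 + e) * measure \<nu> A"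
    using e by (subst (asm) ennreal_le_iff) auto
qed

lemma sum_indicator_single:
  fixes f :: "nat \<Rightarrow> 'x::comm_semiring_1"
  assumes disj: "\<And>i j. i \<noteq> j \<Longrightarrow> B i \<inter> B j = {}" and j: "j < n" "y \<in> B j"
  shows "(\<Sum>i<n. f i * indicator (B i) y) = f j"
proof -
  have "(\<Sum>i<n. f i * indicator (B i) y) = f j * indicator (B j) y"
  proof (rule sum.remove[THEN trans])
    show "finite {..<n}" by simp
    show "j \<in> {..<n}" using j by simp
    have "(\<Sum>i\<in>{..<n} - {j}. f i * indicator (B i) y) = 0"
      using disj j by (intro sum.neutral) (auto simp: indicator_def)
    then show "f j * indicator (B j) y + (\<Sum>i\<in>{..<n} - {j}. f i * indicator (B i) y) = f j * indicator (B j) y"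
      by simp
  qed
  then show ?thesis using j by simp
qed

locale glue =
  fixes \<mu>X :: "'a::metric_space measure" and \<mu>Y :: "'b::metric_space measure"
    and \<mu>Z :: "'c::metric_space measure"
    and \<pi>1 :: "('a \<times> 'b) measure" and \<pi>2 :: "('b \<times> 'c) measure"
    and e1 e2 \<delta> :: real and n :: nat and B :: "nat \<Rightarrow> 'b set"
  assumes cX: "compact (UNIV::'a set)" and cY: "compact (UNIV::'b set)" and cZ: "compact (UNIV::'c set)"
    and pX: "prob_space \<mu>X" and sX: "sets \<mu>X = sets borel"
    and pY: "prob_space \<mu>Y" and sY: "sets \<mu>Y = sets borel"
    and pZ: "prob_space \<mu>Z" and sZ: "sets \<mu>Z = sets borel"
    and e1: "0 \<le> e1" and e2: "0 \<le> e2" and dpos: "0 < \<delta>"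
    and pi1: "\<pi>1 \<in> sS e1 e2 \<mu>X \<mu>Y" and pi2: "\<pi>2 \<in> sS e1 e2 \<mu>Y \<mu>Z"
    and B_borel[measurable]: "\<And>i. B i \<in> sets borel"
    and B_disj: "\<And>i j. i \<noteq> j \<Longrightarrow> B i \<inter> B j = {}"
    and B_cover: "\<And>y. \<exists>i<n. y \<in> B i"
    and B_diam: "\<And>i y y'. y \<in> B i \<Longrightarrow> y' \<in> B i \<Longrightarrow> dist y y' \<le> \<delta>"
begin

lemma p1: "prob_space \<pi>1" and s1: "sets \<pi>1 = sets borel"
  and mX1: "mutual_bdd (distr \<pi>1 borel fst) \<mu>X e1" and mY1: "mutual_bdd (distr \<pi>1 borel snd) \<mu>Y e2"
  using pi1 unfolding sS_def by auto

lemma p2: "prob_space \<pi>2" and s2: "sets \<pi>2 = sets borel"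
  and mY2: "mutual_bdd (distr \<pi>2 borel fst) \<mu>Y e1" and mZ2: "mutual_bdd (distr \<pi>2 borel snd) \<mu>Z e2"
  using pi2 unfolding sS_def by auto

lemma fst1[measurable]: "fst \<in> borel_measurable \<pi>1"
  by (rule cont_meas[OF s1]) (intro continuous_intros)
lemma snd1[measurable]: "snd \<in> borel_measurable \<pi>1"
  by (rule cont_meas[OF s1]) (intro continuous_intros)
lemma fst2[measurable]: "fst \<in> borel_measurable \<pi>2"
  by (rule cont_meas[OF s2]) (intro continuous_intros)
lemma snd2[measurable]: "snd \<in> borel_measurable \<pi>2"
  by (rule cont_meas[OF s2]) (intro continuous_intros)

definition "\<nu>1 = distr \<pi>1 borel snd"
definition "\<nu>2 = distr \<pi>2 borel fst"
definition "m1 i = measure \<nu>1 (B i)"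
definition "m2 i = measure \<nu>2 (B i)"
definition "mY i = measure \<mu>Y (B i)"
definition "c i = mY i / (m1 i * m2 i)"

lemma pn1: "prob_space \<nu>1" unfolding \<nu>1_def by (rule prob_space.prob_space_distr[OF p1]) simp
lemma pn2: "prob_space \<nu>2" unfolding \<nu>2_def by (rule prob_space.prob_space_distr[OF p2]) simp
lemma sn1: "sets \<nu>1 = sets borel" unfolding \<nu>1_def by simp
lemma sn2: "sets \<nu>2 = sets borel" unfolding \<nu>2_def by simp

lemma bounds:
  "mY i \<le> (1 + e2) * m1 i" "m1 i \<le> (1 + e2) * mY i"
  "mY i \<le> (1 + e1) * m2 i" "m2 i \<le> (1 + e1) * mY i"
proof -
  have Bi: "B i \<in> sets \<mu>Y" using sY by simp
  show "mY i \<le> (1 + e2) * m1 i" "m1 i \<le> (1 + e2) * mY i"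
    using real_bounds_from_mb[OF mY1[folded \<nu>1_def] pn1 pY _ Bi e2] sn1 sY
    unfolding mY_def m1_def by auto
  show "mY i \<le> (1 + e1) * m2 i" "m2 i \<le> (1 + e1) * mY i"
    using real_bounds_from_mb[OF mY2[folded \<nu>2_def] pn2 pY _ Bi e1] sn2 sY
    unfolding mY_def m2_def by auto
qed

lemma nonneg: "0 \<le> m1 i" "0 \<le> m2 i" "0 \<le> mY i" "0 \<le> c i"
  unfolding c_def m1_def m2_def mY_def by auto

lemma t1_upper: "c i * m2 i \<le> 1 + e2"
proof (cases "m2 i = 0 \<or> m1 i = 0")
  case True then show ?thesis using e2 unfolding c_def by auto
next
  case False
  then have "c i * m2 i = mY i / m1 i" unfolding c_def by (simp add: field_simps)
  also have "\<dots> \<le> 1 + e2" using bounds(1)[of i] nonneg[of i] False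
    by (simp add: divide_le_eq mult.commute)
  finally show ?thesis .
qed

lemma t2_upper: "c i * m1 i \<le> 1 + e1"
proof (cases "m2 i = 0 \<or> m1 i = 0")
  case True then show ?thesis using e1 unfolding c_def by auto
next
  case False
  then have "c i * m1 i = mY i / m2 i" unfolding c_def by (simp add: field_simps)
  also have "\<dots> \<le> 1 + e1" using bounds(3)[of i] nonneg[of i] False
    by (simp add: divide_le_eq mult.commute)
  finally show ?thesis .
qed

lemma t1_lower: assumes "0 < m1 i" shows "1 \<le> (1 + e2) * (c i * m2 i)"
proof -
  have "0 < (1 + e2) * mY i" using bounds(2)[of i] assms by linarith
  then have "0 < mY i" using e2 by (simp add: zero_less_mult_iff)
  then have "0 < (1 + e1) * m2 i" using bounds(3)[of i] by linarith
  then have "0 < m2 i" using e1 by (simp add: zero_less_mult_iff)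
  then have "c i * m2 i = mY i / m1 i" using assms unfolding c_def by (simp add: field_simps)
  then have "(1 + e2) * (c i * m2 i) = ((1 + e2) * mY i) / m1 i" by simp
  moreover have "1 \<le> ((1 + e2) * mY i) / m1 i" using bounds(2)[of i] assms by (simp add: le_divide_eq)
  ultimately show ?thesis by simp
qed

lemma t2_lower: assumes "0 < m2 i" shows "1 \<le> (1 + e1) * (c i * m1 i)"
proof -
  have "0 < (1 + e1) * mY i" using bounds(4)[of i] assms by linarith
  then have "0 < mY i" using e1 by (simp add: zero_less_mult_iff)
  then have "0 < (1 + e2) * m1 i" using bounds(1)[of i] by linarith
  then have "0 < m1 i" using e2 by (simp add: zero_less_mult_iff)
  then have "c i * m1 i = mY i / m2 i" using assms unfolding c_def by (simp add: field_simps)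
  then have "(1 + e1) * (c i * m1 i) = ((1 + e1) * mY i) / m2 i" by simp
  moreover have "1 \<le> ((1 + e1) * mY i) / m2 i" using bounds(4)[of i] assms by (simp add: le_divide_eq)
  ultimately show ?thesis by simp
qed

lemma t_sum: "c i * m2 i * m1 i = mY i"
proof (cases "m2 i = 0 \<or> m1 i = 0")
  case True
  then have "mY i = 0" using bounds(1,3)[of i] nonneg[of i] by auto
  then show ?thesis unfolding c_def by simp
next
  case False then show ?thesis unfolding c_def by (simp add: field_simps)
qed

end

context glue begin

sublocale P1: prob_space \<pi>1 by (rule p1)
sublocale P2: prob_space \<pi>2 by (rule p2)
sublocale N1: prob_space \<nu>1 by (rule pn1)
sublocale N2: prob_space \<nu>2 by (rule pn2)
sublocale MY: prob_space \<mu>Y by (rule pY)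
sublocale PP: pair_prob_space \<pi>1 \<pi>2 by unfold_locales

definition w :: "(('a \<times> 'b) \<times> ('b \<times> 'c)) \<Rightarrow> ennreal" where
  "w q = (\<Sum>i<n. ennreal (c i) * indicator (B i) (snd (fst q)) * indicator (B i) (fst (snd q)))"
definition r1 :: "'b \<Rightarrow> ennreal" where "r1 y = (\<Sum>i<n. ennreal (c i * m2 i) * indicator (B i) y)"
definition r2 :: "'b \<Rightarrow> ennreal" where "r2 y = (\<Sum>i<n. ennreal (c i * m1 i) * indicator (B i) y)"

lemma w_meas[measurable]: "w \<in> borel_measurable (\<pi>1 \<Otimes>\<^sub>M \<pi>2)"
  unfolding w_def by measurable

lemma r1_meas[measurable]: "r1 \<in> borel_measurable borel"
  unfolding r1_def by measurable
lemma r2_meas[measurable]: "r2 \<in> borel_measurable borel"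
  unfolding r2_def by measurable

lemma ind2: "(\<integral>\<^sup>+r. indicator (B i) (fst r) \<partial>\<pi>2) = ennreal (m2 i)"
proof -
  have "(\<integral>\<^sup>+r. indicator (B i) (fst r) \<partial>\<pi>2) = (\<integral>\<^sup>+y. indicator (B i) y \<partial>\<nu>2)"
    unfolding \<nu>2_def by (subst nn_integral_distr) auto
  also have "\<dots> = emeasure \<nu>2 (B i)" using sn2 by (simp add: nn_integral_indicator)
  also have "\<dots> = ennreal (m2 i)" unfolding m2_def by (simp add: N2.emeasure_eq_measure)
  finally show ?thesis .
qed

lemma ind1: "(\<integral>\<^sup>+p. indicator (B i) (snd p) \<partial>\<pi>1) = ennreal (m1 i)"
proof -
  have "(\<integral>\<^sup>+p. indicator (B i) (snd p) \<partial>\<pi>1) = (\<integral>\<^sup>+y. indicator (B i) y \<partial>\<nu>1)"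
    unfolding \<nu>1_def by (subst nn_integral_distr) auto
  also have "\<dots> = emeasure \<nu>1 (B i)" using sn1 by (simp add: nn_integral_indicator)
  also have "\<dots> = ennreal (m1 i)" unfolding m1_def by (simp add: N1.emeasure_eq_measure)
  finally show ?thesis .
qed

lemma int_fst:
  assumes g[measurable]: "g \<in> borel_measurable \<pi>1"
  shows "(\<integral>\<^sup>+q. w q * g (fst q) \<partial>(\<pi>1 \<Otimes>\<^sub>M \<pi>2)) = (\<integral>\<^sup>+p. g p * r1 (snd p) \<partial>\<pi>1)"
proof -
  have "(\<integral>\<^sup>+q. w q * g (fst q) \<partial>(\<pi>1 \<Otimes>\<^sub>M \<pi>2)) = (\<integral>\<^sup>+p. \<integral>\<^sup>+r. w (p, r) * g p \<partial>\<pi>2 \<partial>\<pi>1)"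
    using P2.nn_integral_fst[of "\<lambda>q. w q * g (fst q)" \<pi>1] by simp
  also have "\<dots> = (\<integral>\<^sup>+p. g p * r1 (snd p) \<partial>\<pi>1)"
  proof (rule nn_integral_cong)
    fix p
    have "(\<integral>\<^sup>+r. w (p, r) * g p \<partial>\<pi>2) =
        (\<integral>\<^sup>+r. (\<Sum>i<n. (ennreal (c i) * indicator (B i) (snd p) * g p) * indicator (B i) (fst r)) \<partial>\<pi>2)"
      unfolding w_def sum_distrib_right by (intro nn_integral_cong sum.cong refl) (simp add: mult_ac)
    also have "\<dots> = (\<Sum>i<n. (ennreal (c i) * indicator (B i) (snd p) * g p) * (\<integral>\<^sup>+r. indicator (B i) (fst r) \<partial>\<pi>2))"
      by (subst nn_integral_sum) (auto simp: nn_integral_cmult)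
    also have "\<dots> = (\<Sum>i<n. (ennreal (c i) * indicator (B i) (snd p) * g p) * ennreal (m2 i))"
      by (simp add: ind2)
    also have "\<dots> = g p * r1 (snd p)"
      unfolding r1_def by (simp add: sum_distrib_left ennreal_mult nonneg mult_ac)
    finally show "(\<integral>\<^sup>+r. w (p, r) * g p \<partial>\<pi>2) = g p * r1 (snd p)" .
  qed
  finally show ?thesis .
qed

lemma int_snd:
  assumes h[measurable]: "h \<in> borel_measurable \<pi>2"
  shows "(\<integral>\<^sup>+q. w q * h (snd q) \<partial>(\<pi>1 \<Otimes>\<^sub>M \<pi>2)) = (\<integral>\<^sup>+r. h r * r2 (fst r) \<partial>\<pi>2)"
proof -
  have "(\<integral>\<^sup>+q. w q * h (snd q) \<partial>(\<pi>1 \<Otimes>\<^sub>M \<pi>2)) = (\<integral>\<^sup>+r. \<integral>\<^sup>+p. w (p, r) * h r \<partial>\<pi>1 \<partial>\<pi>2)"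
    using PP.nn_integral_snd[of "\<lambda>q. w q * h (snd q)"] by simp
  also have "\<dots> = (\<integral>\<^sup>+r. h r * r2 (fst r) \<partial>\<pi>2)"
  proof (rule nn_integral_cong)
    fix r
    have "(\<integral>\<^sup>+p. w (p, r) * h r \<partial>\<pi>1) =
        (\<integral>\<^sup>+p. (\<Sum>i<n. (ennreal (c i) * indicator (B i) (fst r) * h r) * indicator (B i) (snd p)) \<partial>\<pi>1)"
      unfolding w_def sum_distrib_right by (intro nn_integral_cong sum.cong refl) (simp add: mult_ac)
    also have "\<dots> = (\<Sum>i<n. (ennreal (c i) * indicator (B i) (fst r) * h r) * (\<integral>\<^sup>+p. indicator (B i) (snd p) \<partial>\<pi>1))"
      by (subst nn_integral_sum) (auto simp: nn_integral_cmult)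
    also have "\<dots> = (\<Sum>i<n. (ennreal (c i) * indicator (B i) (fst r) * h r) * ennreal (m1 i))"
      by (simp add: ind1)
    also have "\<dots> = h r * r2 (fst r)"
      unfolding r2_def by (simp add: sum_distrib_left ennreal_mult nonneg mult_ac)
    finally show "(\<integral>\<^sup>+p. w (p, r) * h r \<partial>\<pi>1) = h r * r2 (fst r)" .
  qed
  finally show ?thesis .
qed

lemma r1_single: "j < n \<Longrightarrow> y \<in> B j \<Longrightarrow> r1 y = ennreal (c j * m2 j)"
  unfolding r1_def by (rule sum_indicator_single[OF B_disj])
lemma r2_single: "j < n \<Longrightarrow> y \<in> B j \<Longrightarrow> r2 y = ennreal (c j * m1 j)"
  unfolding r2_def by (rule sum_indicator_single[OF B_disj])

lemma r1_le: "r1 y \<le> ennreal (1 + e2)"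
proof -
  obtain j where "j < n" "y \<in> B j" using B_cover by blast
  then show ?thesis using r1_single t1_upper by (simp add: ennreal_leI)
qed

lemma r2_le: "r2 y \<le> ennreal (1 + e1)"
proof -
  obtain j where "j < n" "y \<in> B j" using B_cover by blast
  then show ?thesis using r2_single t2_upper by (simp add: ennreal_leI)
qed

lemma r1_ge: "AE p in \<pi>1. 1 \<le> ennreal (1 + e2) * r1 (snd p)"
proof -
  have "AE y in \<nu>1. \<forall>i\<in>{..<n}. m1 i = 0 \<longrightarrow> y \<notin> B i"
  proof (subst AE_finite_all)
    show "\<forall>i\<in>{..<n}. AE y in \<nu>1. m1 i = 0 \<longrightarrow> y \<notin> B i"
    proof
      fix i assume "i \<in> {..<n}"
      show "AE y in \<nu>1. m1 i = 0 \<longrightarrow> y \<notin> B i"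
      proof (cases "m1 i = 0")
        case True
        then have "B i \<in> null_sets \<nu>1" using sn1
          by (simp add: null_sets_def N1.emeasure_eq_measure m1_def)
        from AE_not_in[OF this] show ?thesis by (rule eventually_mono) simp
      qed simp
    qed
  qed simp
  moreover have "1 \<le> ennreal (1 + e2) * r1 y" if "\<forall>i\<in>{..<n}. m1 i = 0 \<longrightarrow> y \<notin> B i" for y
  proof -
    obtain j where j: "j < n" "y \<in> B j" using B_cover by blast
    then have "m1 j \<noteq> 0" using that by auto
    then have "0 < m1 j" using nonneg[of j] by simp
    then have "1 \<le> (1 + e2) * (c j * m2 j)" by (rule t1_lower)
    moreover have eq: "ennreal ((1 + e2) * (c j * m2 j)) = ennreal (1 + e2) * ennreal (c j * m2 j)"
      by (rule ennreal_mult) (use e2 nonneg[of j] in auto)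
    ultimately show ?thesis using r1_single[OF j] by (metis ennreal_1 ennreal_leI)
  qed
  ultimately have "AE y in \<nu>1. 1 \<le> ennreal (1 + e2) * r1 y" by (auto elim: eventually_mono)
  then show ?thesis unfolding \<nu>1_def by (subst (asm) AE_distr_iff) auto
qed

lemma r2_ge: "AE r in \<pi>2. 1 \<le> ennreal (1 + e1) * r2 (fst r)"
proof -
  have "AE y in \<nu>2. \<forall>i\<in>{..<n}. m2 i = 0 \<longrightarrow> y \<notin> B i"
  proof (subst AE_finite_all)
    show "\<forall>i\<in>{..<n}. AE y in \<nu>2. m2 i = 0 \<longrightarrow> y \<notin> B i"
    proof
      fix i assume "i \<in> {..<n}"
      show "AE y in \<nu>2. m2 i = 0 \<longrightarrow> y \<notin> B i"
      proof (cases "m2 i = 0")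
        case True
        then have "B i \<in> null_sets \<nu>2" using sn2
          by (simp add: null_sets_def N2.emeasure_eq_measure m2_def)
        from AE_not_in[OF this] show ?thesis by (rule eventually_mono) simp
      qed simp
    qed
  qed simp
  moreover have "1 \<le> ennreal (1 + e1) * r2 y" if "\<forall>i\<in>{..<n}. m2 i = 0 \<longrightarrow> y \<notin> B i" for y
  proof -
    obtain j where j: "j < n" "y \<in> B j" using B_cover by blast
    then have "m2 j \<noteq> 0" using that by auto
    then have "0 < m2 j" using nonneg[of j] by simp
    then have "1 \<le> (1 + e1) * (c j * m1 j)" by (rule t2_lower)
    moreover have eq: "ennreal ((1 + e1) * (c j * m1 j)) = ennreal (1 + e1) * ennreal (c j * m1 j)"
      by (rule ennreal_mult) (use e1 nonneg[of j] in auto)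
    ultimately show ?thesis using r2_single[OF j] by (metis ennreal_1 ennreal_leI)
  qed
  ultimately have "AE y in \<nu>2. 1 \<le> ennreal (1 + e1) * r2 y" by (auto elim: eventually_mono)
  then show ?thesis unfolding \<nu>2_def by (subst (asm) AE_distr_iff) auto
qed

end

context glue begin

definition "\<Gamma> = density (\<pi>1 \<Otimes>\<^sub>M \<pi>2) w"
definition mp :: "(('a \<times> 'b) \<times> ('b \<times> 'c)) \<Rightarrow> 'a \<times> 'c" where "mp q = (fst (fst q), snd (snd q))"
definition "\<gamma> = distr \<Gamma> borel mp"

lemma sets_\<Gamma>: "sets \<Gamma> = sets (\<pi>1 \<Otimes>\<^sub>M \<pi>2)" unfolding \<Gamma>_def by simp
lemma space_\<Gamma>: "space \<Gamma> = space (\<pi>1 \<Otimes>\<^sub>M \<pi>2)" unfolding \<Gamma>_def by simp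

lemma mp_meas[measurable]: "mp \<in> measurable (\<pi>1 \<Otimes>\<^sub>M \<pi>2) borel"
proof -
  have mpm: "mp \<in> measurable (\<pi>1 \<Otimes>\<^sub>M \<pi>2) (borel \<Otimes>\<^sub>M borel)" unfolding mp_def by measurable
  have eq: "measurable (\<pi>1 \<Otimes>\<^sub>M \<pi>2) (borel \<Otimes>\<^sub>M borel) = measurable (\<pi>1 \<Otimes>\<^sub>M \<pi>2) (borel :: ('a \<times> 'c) measure)"
    by (rule measurable_cong_sets[OF refl sets_borel_prod_compact[OF cX cZ]])
  show ?thesis using mpm unfolding eq .
qed

lemma mp_meas': "mp \<in> measurable \<Gamma> borel"
  by (metis measurable_cong_sets sets_\<Gamma> mp_meas)

lemma sumY: "(\<Sum>i<n. mY i) = 1"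
proof -
  have "(\<Sum>i<n. mY i) = measure \<mu>Y (\<Union>i\<in>{..<n}. B i)"
    unfolding mY_def using sY B_disj
    by (intro MY.finite_measure_finite_Union[symmetric]) (auto simp: disjoint_family_on_def)
  also have "(\<Union>i\<in>{..<n}. B i) = space \<mu>Y"
    using B_cover sets_eq_imp_space_eq[OF sY] by auto
  finally show ?thesis using MY.prob_space by simp
qed

lemma int_r1: "(\<integral>\<^sup>+p. r1 (snd p) \<partial>\<pi>1) = 1"
proof -
  have "(\<integral>\<^sup>+p. r1 (snd p) \<partial>\<pi>1) = (\<integral>\<^sup>+y. r1 y \<partial>\<nu>1)"
    unfolding \<nu>1_def by (subst nn_integral_distr) auto
  also have "\<dots> = (\<Sum>i<n. ennreal (c i * m2 i) * emeasure \<nu>1 (B i))"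
    unfolding r1_def using sn1 by (subst nn_integral_sum) (auto simp: nn_integral_cmult_indicator)
  also have "\<dots> = (\<Sum>i<n. ennreal (mY i))"
    by (intro sum.cong refl) (simp add: N1.emeasure_eq_measure m1_def[symmetric] ennreal_mult[symmetric] nonneg t_sum)
  also have "\<dots> = ennreal (\<Sum>i<n. mY i)" by (rule sum_ennreal) (simp add: nonneg)
  finally show ?thesis by (simp add: sumY)
qed

lemma \<Gamma>_prob: "prob_space \<Gamma>"
proof (rule prob_spaceI)
  have "emeasure \<Gamma> (space \<Gamma>) = (\<integral>\<^sup>+q. w q * indicator (space (\<pi>1 \<Otimes>\<^sub>M \<pi>2)) q \<partial>(\<pi>1 \<Otimes>\<^sub>M \<pi>2))"
    unfolding space_\<Gamma> unfolding \<Gamma>_def by (rule emeasure_density) auto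
  also have "\<dots> = (\<integral>\<^sup>+q. w q * (\<lambda>_. 1) (fst q) \<partial>(\<pi>1 \<Otimes>\<^sub>M \<pi>2))"
    by (intro nn_integral_cong) simp
  also have "\<dots> = (\<integral>\<^sup>+p. r1 (snd p) \<partial>\<pi>1)"
    by (subst int_fst) auto
  finally show "emeasure \<Gamma> (space \<Gamma>) = 1" by (simp add: int_r1)
qed

lemma \<gamma>_prob: "prob_space \<gamma>"
  unfolding \<gamma>_def by (rule prob_space.prob_space_distr[OF \<Gamma>_prob mp_meas'])

lemma sets_\<gamma>: "sets \<gamma> = sets borel" unfolding \<gamma>_def by simp

lemma fst_\<gamma>[measurable]: "fst \<in> borel_measurable \<gamma>"
  by (rule cont_meas[OF sets_\<gamma>]) (intro continuous_intros)
lemma snd_\<gamma>[measurable]: "snd \<in> borel_measurable \<gamma>"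
  by (rule cont_meas[OF sets_\<gamma>]) (intro continuous_intros)

lemma fst_bac[measurable]: "fst \<in> borel_measurable (borel :: ('a \<times> 'c) measure)"
  by (intro borel_measurable_continuous_onI continuous_intros)
lemma snd_bac[measurable]: "snd \<in> borel_measurable (borel :: ('a \<times> 'c) measure)"
  by (intro borel_measurable_continuous_onI continuous_intros)

lemma int_\<Gamma>:
  assumes f[measurable]: "f \<in> borel_measurable (\<pi>1 \<Otimes>\<^sub>M \<pi>2)"
  shows "(\<integral>\<^sup>+q. f q \<partial>\<Gamma>) = (\<integral>\<^sup>+q. w q * f q \<partial>(\<pi>1 \<Otimes>\<^sub>M \<pi>2))"
  unfolding \<Gamma>_def by (rule nn_integral_density) auto

lemma \<gamma>X: assumes A[measurable]: "A \<in> sets borel"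
  shows "emeasure (distr \<gamma> borel fst) A = (\<integral>\<^sup>+p. indicator A (fst p) * r1 (snd p) \<partial>\<pi>1)"
proof -
  have "emeasure (distr \<gamma> borel fst) A = (\<integral>\<^sup>+x. indicator A x \<partial>(distr \<gamma> borel fst))"
    by (simp add: nn_integral_indicator)
  also have "\<dots> = (\<integral>\<^sup>+z. indicator A (fst z) \<partial>\<gamma>)"
    by (subst nn_integral_distr) auto
  also have "\<dots> = (\<integral>\<^sup>+q. indicator A (fst (mp q)) \<partial>\<Gamma>)"
    unfolding \<gamma>_def by (subst nn_integral_distr[OF mp_meas']) auto
  also have "\<dots> = (\<integral>\<^sup>+q. w q * indicator A (fst (fst q)) \<partial>(\<pi>1 \<Otimes>\<^sub>M \<pi>2))"
    by (subst int_\<Gamma>) (auto simp: mp_def)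
  also have "\<dots> = (\<integral>\<^sup>+p. indicator A (fst p) * r1 (snd p) \<partial>\<pi>1)"
    by (subst int_fst[of "\<lambda>p. indicator A (fst p)"]) auto
  finally show ?thesis .
qed

lemma \<gamma>Z: assumes A[measurable]: "A \<in> sets borel"
  shows "emeasure (distr \<gamma> borel snd) A = (\<integral>\<^sup>+r. indicator A (snd r) * r2 (fst r) \<partial>\<pi>2)"
proof -
  have "emeasure (distr \<gamma> borel snd) A = (\<integral>\<^sup>+x. indicator A x \<partial>(distr \<gamma> borel snd))"
    by (simp add: nn_integral_indicator)
  also have "\<dots> = (\<integral>\<^sup>+z. indicator A (snd z) \<partial>\<gamma>)"
    by (subst nn_integral_distr) auto
  also have "\<dots> = (\<integral>\<^sup>+q. indicator A (snd (mp q)) \<partial>\<Gamma>)"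
    unfolding \<gamma>_def by (subst nn_integral_distr[OF mp_meas']) auto
  also have "\<dots> = (\<integral>\<^sup>+q. w q * indicator A (snd (snd q)) \<partial>(\<pi>1 \<Otimes>\<^sub>M \<pi>2))"
    by (subst int_\<Gamma>) (auto simp: mp_def)
  also have "\<dots> = (\<integral>\<^sup>+r. indicator A (snd r) * r2 (fst r) \<partial>\<pi>2)"
    by (subst int_snd[of "\<lambda>r. indicator A (snd r)"]) auto
  finally show ?thesis .
qed

lemma X1_eq: assumes A[measurable]: "A \<in> sets borel"
  shows "(\<integral>\<^sup>+p. indicator A (fst p) \<partial>\<pi>1) = emeasure (distr \<pi>1 borel fst) A"
proof -
  have "(\<integral>\<^sup>+x. indicator A x \<partial>(distr \<pi>1 borel fst)) = (\<integral>\<^sup>+p. indicator A (fst p) \<partial>\<pi>1)"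
    by (rule nn_integral_distr) auto
  then show ?thesis using A by (simp add: nn_integral_indicator)
qed

lemma Z2_eq: assumes A[measurable]: "A \<in> sets borel"
  shows "(\<integral>\<^sup>+r. indicator A (snd r) \<partial>\<pi>2) = emeasure (distr \<pi>2 borel snd) A"
proof -
  have "(\<integral>\<^sup>+x. indicator A x \<partial>(distr \<pi>2 borel snd)) = (\<integral>\<^sup>+r. indicator A (snd r) \<partial>\<pi>2)"
    by (rule nn_integral_distr) auto
  then show ?thesis using A by (simp add: nn_integral_indicator)
qed

lemma fmX: "finite_measure \<mu>X" using pX prob_space_def by blast
lemma fmZ: "finite_measure \<mu>Z" using pZ prob_space_def by blast
lemma fmX1: "finite_measure (distr \<pi>1 borel fst)"
  using prob_space.prob_space_distr[OF p1 fst1] prob_space_def by blast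
lemma fmZ2: "finite_measure (distr \<pi>2 borel snd)"
  using prob_space.prob_space_distr[OF p2 snd2] prob_space_def by blast

lemma ennreal_c: "ennreal ((1 + e1) * (1 + e2)) = ennreal (1 + e1) * ennreal (1 + e2)"
  using e1 e2 by (intro ennreal_mult) auto

lemma \<gamma>X_le: assumes A[measurable]: "A \<in> sets borel"
  shows "emeasure (distr \<gamma> borel fst) A \<le> ennreal ((1 + e1) * (1 + e2)) * emeasure \<mu>X A"
proof -
  have "emeasure (distr \<gamma> borel fst) A \<le> (\<integral>\<^sup>+p. ennreal (1 + e2) * indicator A (fst p) \<partial>\<pi>1)"
    unfolding \<gamma>X[OF A] by (intro nn_integral_mono) (auto simp: mult.commute intro!: mult_left_mono r1_le)
  also have "\<dots> = ennreal (1 + e2) * emeasure (distr \<pi>1 borel fst) A"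
    by (subst nn_integral_cmult) (auto simp: X1_eq)
  also have "\<dots> \<le> ennreal (1 + e2) * (ennreal (1 + e1) * emeasure \<mu>X A)"
    using mutual_bdd_D(1)[OF mX1 fmX fmX1] sX A by (intro mult_left_mono) auto
  finally show ?thesis unfolding ennreal_c by (simp only: mult_ac)
qed

lemma \<gamma>X_ge: assumes A[measurable]: "A \<in> sets borel"
  shows "emeasure \<mu>X A \<le> ennreal ((1 + e1) * (1 + e2)) * emeasure (distr \<gamma> borel fst) A"
proof -
  have "emeasure \<mu>X A \<le> ennreal (1 + e1) * emeasure (distr \<pi>1 borel fst) A"
    using mutual_bdd_D(2)[OF mX1 fmX fmX1] sX A by auto
  also have "\<dots> = ennreal (1 + e1) * (\<integral>\<^sup>+p. indicator A (fst p) \<partial>\<pi>1)" by (simp add: X1_eq)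
  also have "\<dots> \<le> ennreal (1 + e1) * (\<integral>\<^sup>+p. ennreal (1 + e2) * (indicator A (fst p) * r1 (snd p)) \<partial>\<pi>1)"
  proof (intro mult_left_mono nn_integral_mono_AE)
    show "AE p in \<pi>1. indicator A (fst p) \<le> ennreal (1 + e2) * (indicator A (fst p) * r1 (snd p))"
      using r1_ge by (rule eventually_mono) (auto simp: indicator_def)
  qed simp
  also have "\<dots> = ennreal (1 + e1) * (ennreal (1 + e2) * emeasure (distr \<gamma> borel fst) A)"
    by (subst nn_integral_cmult) (auto simp: \<gamma>X)
  finally show ?thesis unfolding ennreal_c by (simp only: mult_ac)
qed

lemma \<gamma>Z_le: assumes A[measurable]: "A \<in> sets borel"
  shows "emeasure (distr \<gamma> borel snd) A \<le> ennreal ((1 + e1) * (1 + e2)) * emeasure \<mu>Z A"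
proof -
  have "emeasure (distr \<gamma> borel snd) A \<le> (\<integral>\<^sup>+r. ennreal (1 + e1) * indicator A (snd r) \<partial>\<pi>2)"
    unfolding \<gamma>Z[OF A] by (intro nn_integral_mono) (auto simp: mult.commute intro!: mult_left_mono r2_le)
  also have "\<dots> = ennreal (1 + e1) * emeasure (distr \<pi>2 borel snd) A"
    by (subst nn_integral_cmult) (auto simp: Z2_eq)
  also have "\<dots> \<le> ennreal (1 + e1) * (ennreal (1 + e2) * emeasure \<mu>Z A)"
    using mutual_bdd_D(1)[OF mZ2 fmZ fmZ2] sZ A by (intro mult_left_mono) auto
  finally show ?thesis unfolding ennreal_c by (simp only: mult_ac)
qed

lemma \<gamma>Z_ge: assumes A[measurable]: "A \<in> sets borel"
  shows "emeasure \<mu>Z A \<le> ennreal ((1 + e1) * (1 + e2)) * emeasure (distr \<gamma> borel snd) A"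
proof -
  have "emeasure \<mu>Z A \<le> ennreal (1 + e2) * emeasure (distr \<pi>2 borel snd) A"
    using mutual_bdd_D(2)[OF mZ2 fmZ fmZ2] sZ A by auto
  also have "\<dots> = ennreal (1 + e2) * (\<integral>\<^sup>+r. indicator A (snd r) \<partial>\<pi>2)" by (simp add: Z2_eq)
  also have "\<dots> \<le> ennreal (1 + e2) * (\<integral>\<^sup>+r. ennreal (1 + e1) * (indicator A (snd r) * r2 (fst r)) \<partial>\<pi>2)"
  proof (intro mult_left_mono nn_integral_mono_AE)
    show "AE r in \<pi>2. indicator A (snd r) \<le> ennreal (1 + e1) * (indicator A (snd r) * r2 (fst r))"
      using r2_ge by (rule eventually_mono) (auto simp: indicator_def)
  qed simp
  also have "\<dots> = ennreal (1 + e2) * (ennreal (1 + e1) * emeasure (distr \<gamma> borel snd) A)"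
    by (subst nn_integral_cmult) (auto simp: \<gamma>Z)
  finally show ?thesis unfolding ennreal_c by (simp only: mult_ac)
qed

lemma \<gamma>_in: "\<gamma> \<in> sS (e1 + e2 + e1 * e2) (e1 + e2 + e1 * e2) \<mu>X \<mu>Z"
proof -
  have c1: "1 \<le> (1 + e1) * (1 + e2)" using e1 e2 mult_nonneg_nonneg[OF e1 e2]
    by (simp add: algebra_simps)
  have ce: "(1 + e1) * (1 + e2) - 1 = e1 + e2 + e1 * e2" by (simp add: algebra_simps)
  have fg1: "finite_measure (distr \<gamma> borel fst)"
    using prob_space.prob_space_distr[OF \<gamma>_prob fst_\<gamma>] prob_space_def by blast
  have fg2: "finite_measure (distr \<gamma> borel snd)"
    using prob_space.prob_space_distr[OF \<gamma>_prob snd_\<gamma>] prob_space_def by blast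
  have "mutual_bdd (distr \<gamma> borel fst) \<mu>X ((1 + e1) * (1 + e2) - 1)"
    by (rule mutual_bdd_I[OF fmX fg1 _ c1]) (auto simp: sX \<gamma>X_le \<gamma>X_ge)
  moreover have "mutual_bdd (distr \<gamma> borel snd) \<mu>Z ((1 + e1) * (1 + e2) - 1)"
    by (rule mutual_bdd_I[OF fmZ fg2 _ c1]) (auto simp: sZ \<gamma>Z_le \<gamma>Z_ge)
  ultimately show ?thesis
    unfolding sS_def using \<gamma>_prob sets_\<gamma> ce by simp
qed

end

lemma scale_powr:
  fixes l u q :: real
  assumes "0 < l" "0 \<le> u"
  shows "l * (u / l) powr q = l powr (1 - q) * u powr q"
proof -
  have "(u / l) powr q = u powr q / l powr q" using assms by (simp add: powr_divide)
  moreover have "l powr (1 - q) = l / l powr q" using assms by (simp add: powr_diff)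
  ultimately show ?thesis by simp
qed

lemma powr_neg_ge1:
  fixes x q :: real
  assumes "0 < x" "x \<le> 1" "1 \<le> q"
  shows "1 \<le> x powr (1 - q)"
proof -
  have "x powr (q - 1) \<le> 1" using assms by (intro powr_le1) auto
  moreover have "0 < x powr (q - 1)" using assms by simp
  moreover have "x powr (1 - q) = 1 / x powr (q - 1)"
    using assms by (simp add: powr_minus_divide[symmetric])
  ultimately show ?thesis by simp
qed

lemma conv2:
  fixes u v l q :: real
  assumes u: "0 \<le> u" and v: "0 \<le> v" and l: "0 < l" "l < 1" and q: "1 \<le> q"
  shows "(u + v) powr q \<le> l powr (1 - q) * u powr q + (1 - l) powr (1 - q) * v powr q"
proof (cases "u = 0")
  case True
  have "1 \<le> (1 - l) powr (1 - q)" using l q by (intro powr_neg_ge1) auto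
  then have "1 * v powr q \<le> (1 - l) powr (1 - q) * v powr q" by (intro mult_right_mono) auto
  then show ?thesis using True q by simp
next
  case u0: False
  show ?thesis
  proof (cases "v = 0")
    case True
    have "1 \<le> l powr (1 - q)" using l q by (intro powr_neg_ge1) auto
    then have "1 * u powr q \<le> l powr (1 - q) * u powr q" by (intro mult_right_mono) auto
    then show ?thesis using True q by simp
  next
    case v0: False
    have cv: "convex_on {0<..} (\<lambda>x::real. x powr q)" by (rule powr_convex[OF q])
    have "(l * (u / l) + (1 - l) * (v / (1 - l))) powr q \<le> l * (u / l) powr q + (1 - l) * (v / (1 - l)) powr q"
      using convex_onD[OF cv, of "1 - l" "u / l" "v / (1 - l)"] u v u0 v0 l by simp
    moreover have "l * (u / l) + (1 - l) * (v / (1 - l)) = u + v" using l by simp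
    ultimately show ?thesis using scale_powr[of l u q] scale_powr[of "1 - l" v q] l u v by simp
  qed
qed

lemma conv3:
  fixes a b c l1 l2 l3 q :: real
  assumes a: "0 \<le> a" and b: "0 \<le> b" and c: "0 \<le> c"
    and l: "0 < l1" "0 < l2" "0 < l3" "l1 + l2 + l3 = 1" and q: "1 \<le> q"
  shows "(a + b + c) powr q \<le> l1 powr (1 - q) * a powr q + l2 powr (1 - q) * b powr q + l3 powr (1 - q) * c powr q"
proof -
  define m where "m = l2 / (1 - l1)"
  have l1': "l1 < 1" using l by simp
  have m: "0 < m" "m < 1" using l unfolding m_def by (auto simp: field_simps)
  have "(a + b + c) powr q = (a + (b + c)) powr q" by (simp add: add.assoc)
  also have "\<dots> \<le> l1 powr (1 - q) * a powr q + (1 - l1) powr (1 - q) * (b + c) powr q"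
    using conv2[OF a _ l(1) l1' q, of "b + c"] b c by simp
  also have "(b + c) powr q \<le> m powr (1 - q) * b powr q + (1 - m) powr (1 - q) * c powr q"
    by (rule conv2[OF b c m q])
  then have "(1 - l1) powr (1 - q) * (b + c) powr q \<le> (1 - l1) powr (1 - q) * (m powr (1 - q) * b powr q + (1 - m) powr (1 - q) * c powr q)"
    by (intro mult_left_mono) auto
  also have "(1 - l1) powr (1 - q) * (m powr (1 - q) * b powr q + (1 - m) powr (1 - q) * c powr q)
      = ((1 - l1) * m) powr (1 - q) * b powr q + ((1 - l1) * (1 - m)) powr (1 - q) * c powr q"
  proof -
    have e1: "((1 - l1) * m) powr (1 - q) = (1 - l1) powr (1 - q) * m powr (1 - q)"
      using l1' m by (simp add: powr_mult)
    have e2: "((1 - l1) * (1 - m)) powr (1 - q) = (1 - l1) powr (1 - q) * (1 - m) powr (1 - q)"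
      using l1' m by (simp add: powr_mult)
    show ?thesis by (simp only: e1 e2 distrib_left mult.assoc)
  qed
  also have "(1 - l1) * m = l2" using l1' unfolding m_def by simp
  also have "(1 - l1) * (1 - m) = l3"
  proof -
    have "(1 - l1) * (1 - m) = (1 - l1) - (1 - l1) * m" by (simp add: algebra_simps)
    also have "(1 - l1) * m = l2" using l1' unfolding m_def by simp
    finally show ?thesis using l(4) by simp
  qed
  finally show ?thesis by simp
qed

lemma term_eq:
  fixes \<alpha> S q :: real
  assumes "0 < \<alpha>" "0 < S"
  shows "(\<alpha> / S) powr (1 - q) * \<alpha> powr q = \<alpha> * S powr (q - 1)"
proof -
  have h1: "(\<alpha> / S) powr (1 - q) = \<alpha> powr (1 - q) / S powr (1 - q)" using assms by (simp add: powr_divide)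
  have h2: "\<alpha> powr (1 - q) * \<alpha> powr q = \<alpha>" using assms by (simp add: powr_add[symmetric])
  have h3: "1 / S powr (1 - q) = S powr (q - 1)" using assms
    by (simp add: powr_minus_divide[symmetric])
  have "(\<alpha> / S) powr (1 - q) * \<alpha> powr q = (\<alpha> powr (1 - q) * \<alpha> powr q) * (1 / S powr (1 - q))"
    unfolding h1 by (simp add: divide_inverse mult_ac)
  also have "\<dots> = \<alpha> * S powr (q - 1)" by (simp only: h2 h3)
  finally show ?thesis .
qed

lemma mink3:
  fixes a1 a2 a3 \<alpha>1 \<alpha>2 \<alpha>3 q :: real
  assumes pos: "0 < \<alpha>1" "0 < \<alpha>2" "0 < \<alpha>3"
    and a: "0 \<le> a1" "a1 \<le> \<alpha>1" "0 \<le> a2" "a2 \<le> \<alpha>2" "0 \<le> a3" "a3 \<le> \<alpha>3" and q: "1 \<le> q"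
  defines "S \<equiv> \<alpha>1 + \<alpha>2 + \<alpha>3"
  shows "(\<alpha>1 / S) powr (1 - q) * a1 powr q + (\<alpha>2 / S) powr (1 - q) * a2 powr q + (\<alpha>3 / S) powr (1 - q) * a3 powr q
     \<le> S powr q"
proof -
  have S: "0 < S" using pos unfolding S_def by simp
  have t: "(\<alpha> / S) powr (1 - q) * x powr q \<le> \<alpha> * S powr (q - 1)" if "0 < \<alpha>" "0 \<le> x" "x \<le> \<alpha>" for \<alpha> x
  proof -
    have "x powr q \<le> \<alpha> powr q" using that q by (intro powr_mono2) auto
    then have "(\<alpha> / S) powr (1 - q) * x powr q \<le> (\<alpha> / S) powr (1 - q) * \<alpha> powr q"
      by (intro mult_left_mono) auto
    also have "\<dots> = \<alpha> * S powr (q - 1)" by (rule term_eq[OF that(1) S])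
    finally show ?thesis .
  qed
  have "(\<alpha>1 / S) powr (1 - q) * a1 powr q + (\<alpha>2 / S) powr (1 - q) * a2 powr q + (\<alpha>3 / S) powr (1 - q) * a3 powr q
      \<le> \<alpha>1 * S powr (q - 1) + \<alpha>2 * S powr (q - 1) + \<alpha>3 * S powr (q - 1)"
    using t[OF pos(1) a(1,2)] t[OF pos(2) a(3,4)] t[OF pos(3) a(5,6)] by linarith
  also have "\<dots> = S * S powr (q - 1)" unfolding S_def by (simp add: algebra_simps)
  also have "\<dots> = S powr 1 * S powr (q - 1)" using S by simp
  also have "\<dots> = S powr (1 + (q - 1))" by (rule powr_add[symmetric])
  also have "\<dots> = S powr q" by simp
  finally show ?thesis .
qed

lemma abs_dist_diff:
  fixes a b c d :: "'x::metric_space"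
  shows "\<bar>dist a b - dist c d\<bar> \<le> dist a c + dist b d"
proof -
  have "dist a b \<le> dist a c + dist c d + dist d b"
    using dist_triangle[of a b c] dist_triangle[of c b d] by linarith
  moreover have "dist c d \<le> dist c a + dist a b + dist b d"
    using dist_triangle[of c d a] dist_triangle[of a d b] by linarith
  ultimately show ?thesis by (simp add: dist_commute abs_le_iff)
qed


lemma distortion_meas:
  fixes M :: "('a::metric_space \<times> 'b::metric_space) measure"
  assumes cA: "compact (UNIV::'a set)" and cB: "compact (UNIV::'b set)" and sM: "sets M = sets borel"
  shows "distortion \<in> borel_measurable (M \<Otimes>\<^sub>M M)"
proof -
  have cab: "compact (UNIV :: ('a \<times> 'b) set)" using compact_Times[OF cA cB] by simp
  have "sets (M \<Otimes>\<^sub>M M) = sets (borel \<Otimes>\<^sub>M borel :: (('a \<times> 'b) \<times> ('a \<times> 'b)) measure)"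
    by (rule sets_pair_measure_cong) (use sM in auto)
  also have "\<dots> = sets borel" by (rule sets_borel_prod_compact[OF cab cab])
  finally have s: "sets (M \<Otimes>\<^sub>M M) = sets (borel :: (('a \<times> 'b) \<times> ('a \<times> 'b)) measure)" .
  have "distortion \<in> borel_measurable (borel :: (('a \<times> 'b) \<times> ('a \<times> 'b)) measure)"
    unfolding distortion_def[abs_def] by (intro borel_measurable_continuous_onI continuous_intros)
  then show ?thesis unfolding measurable_cong_sets[OF s refl] .
qed

context glue begin

lemma pP: "prob_space (\<pi>1 \<Otimes>\<^sub>M \<pi>2)" by (rule prob_space_pair[OF p1 p2])

lemma dbl_fst:
  assumes G[measurable]: "G \<in> borel_measurable (\<pi>1 \<Otimes>\<^sub>M \<pi>1)"
  shows "(\<integral>\<^sup>+z. w (fst z) * w (snd z) * G (fst (fst z), fst (snd z)) \<partial>((\<pi>1 \<Otimes>\<^sub>M \<pi>2) \<Otimes>\<^sub>M (\<pi>1 \<Otimes>\<^sub>M \<pi>2)))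
     \<le> ennreal ((1 + e2)^2) * (\<integral>\<^sup>+z. G z \<partial>(\<pi>1 \<Otimes>\<^sub>M \<pi>1))"
proof -
  define H where "H p = (\<integral>\<^sup>+p'. G (p, p') \<partial>\<pi>1)" for p
  have H[measurable]: "H \<in> borel_measurable \<pi>1"
    unfolding H_def using P1.borel_measurable_nn_integral_fst[OF G] by simp
  have "(\<integral>\<^sup>+z. w (fst z) * w (snd z) * G (fst (fst z), fst (snd z)) \<partial>((\<pi>1 \<Otimes>\<^sub>M \<pi>2) \<Otimes>\<^sub>M (\<pi>1 \<Otimes>\<^sub>M \<pi>2)))
      = (\<integral>\<^sup>+q. \<integral>\<^sup>+q'. w q * w q' * G (fst q, fst q') \<partial>(\<pi>1 \<Otimes>\<^sub>M \<pi>2) \<partial>(\<pi>1 \<Otimes>\<^sub>M \<pi>2))"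
    using sigma_finite_measure.nn_integral_fst[OF prob_space_imp_sigma_finite[OF pP], of "\<lambda>z. w (fst z) * w (snd z) * G (fst (fst z), fst (snd z))" "\<pi>1 \<Otimes>\<^sub>M \<pi>2"]
    by simp
  also have "\<dots> \<le> (\<integral>\<^sup>+q. ennreal (1 + e2) * (w q * H (fst q)) \<partial>(\<pi>1 \<Otimes>\<^sub>M \<pi>2))"
  proof (intro nn_integral_mono)
    fix q assume q: "q \<in> space (\<pi>1 \<Otimes>\<^sub>M \<pi>2)"
    then have fq: "fst q \<in> space \<pi>1" by (auto simp: space_pair_measure)
    have "(\<integral>\<^sup>+q'. w q * w q' * G (fst q, fst q') \<partial>(\<pi>1 \<Otimes>\<^sub>M \<pi>2))
        = (\<integral>\<^sup>+q'. w q' * (w q * G (fst q, fst q')) \<partial>(\<pi>1 \<Otimes>\<^sub>M \<pi>2))" by (simp add: mult_ac)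
    also have "\<dots> = (\<integral>\<^sup>+p'. (w q * G (fst q, p')) * r1 (snd p') \<partial>\<pi>1)"
      by (rule int_fst[of "\<lambda>p'. w q * G (fst q, p')"]) (use fq in measurable)
    also have "\<dots> \<le> (\<integral>\<^sup>+p'. (w q * ennreal (1 + e2)) * G (fst q, p') \<partial>\<pi>1)"
    proof (intro nn_integral_mono)
      fix p'
      have "(w q * G (fst q, p')) * r1 (snd p') \<le> (w q * G (fst q, p')) * ennreal (1 + e2)"
        by (rule mult_left_mono[OF r1_le]) simp
      then show "(w q * G (fst q, p')) * r1 (snd p') \<le> (w q * ennreal (1 + e2)) * G (fst q, p')"
        by (simp add: mult_ac)
    qed
    also have "\<dots> = (w q * ennreal (1 + e2)) * H (fst q)"
      unfolding H_def by (rule nn_integral_cmult) (use fq in measurable)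
    finally show "(\<integral>\<^sup>+q'. w q * w q' * G (fst q, fst q') \<partial>(\<pi>1 \<Otimes>\<^sub>M \<pi>2)) \<le> ennreal (1 + e2) * (w q * H (fst q))"
      by (simp add: mult_ac)
  qed
  also have "\<dots> = ennreal (1 + e2) * (\<integral>\<^sup>+q. w q * H (fst q) \<partial>(\<pi>1 \<Otimes>\<^sub>M \<pi>2))"
    by (rule nn_integral_cmult) measurable
  finally have A: "(\<integral>\<^sup>+z. w (fst z) * w (snd z) * G (fst (fst z), fst (snd z)) \<partial>((\<pi>1 \<Otimes>\<^sub>M \<pi>2) \<Otimes>\<^sub>M (\<pi>1 \<Otimes>\<^sub>M \<pi>2)))
     \<le> ennreal (1 + e2) * (\<integral>\<^sup>+q. w q * H (fst q) \<partial>(\<pi>1 \<Otimes>\<^sub>M \<pi>2))" .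
  have "(\<integral>\<^sup>+q. w q * H (fst q) \<partial>(\<pi>1 \<Otimes>\<^sub>M \<pi>2)) = (\<integral>\<^sup>+p. H p * r1 (snd p) \<partial>\<pi>1)"
    by (rule int_fst[OF H])
  also have "\<dots> \<le> (\<integral>\<^sup>+p. ennreal (1 + e2) * H p \<partial>\<pi>1)"
    by (intro nn_integral_mono) (simp add: mult.commute mult_left_mono r1_le)
  also have "\<dots> = ennreal (1 + e2) * (\<integral>\<^sup>+p. H p \<partial>\<pi>1)"
    by (rule nn_integral_cmult) measurable
  also have "(\<integral>\<^sup>+p. H p \<partial>\<pi>1) = (\<integral>\<^sup>+z. G z \<partial>(\<pi>1 \<Otimes>\<^sub>M \<pi>1))"
    unfolding H_def by (rule P1.nn_integral_fst[OF G])
  finally have B: "(\<integral>\<^sup>+q. w q * H (fst q) \<partial>(\<pi>1 \<Otimes>\<^sub>M \<pi>2)) \<le> ennreal (1 + e2) * (\<integral>\<^sup>+z. G z \<partial>(\<pi>1 \<Otimes>\<^sub>M \<pi>1))" .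
  have eq: "ennreal ((1 + e2)^2) = ennreal (1 + e2) * ennreal (1 + e2)"
    unfolding power2_eq_square by (rule ennreal_mult) (use e2 in auto)
  from A have "(\<integral>\<^sup>+z. w (fst z) * w (snd z) * G (fst (fst z), fst (snd z)) \<partial>((\<pi>1 \<Otimes>\<^sub>M \<pi>2) \<Otimes>\<^sub>M (\<pi>1 \<Otimes>\<^sub>M \<pi>2)))
     \<le> ennreal (1 + e2) * (ennreal (1 + e2) * (\<integral>\<^sup>+z. G z \<partial>(\<pi>1 \<Otimes>\<^sub>M \<pi>1)))"
    by (rule order_trans) (rule mult_left_mono[OF B], simp)
  then show ?thesis unfolding eq mult.assoc .
qed


lemma dbl_snd:
  assumes G[measurable]: "G \<in> borel_measurable (\<pi>2 \<Otimes>\<^sub>M \<pi>2)"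
  shows "(\<integral>\<^sup>+z. w (fst z) * w (snd z) * G (snd (fst z), snd (snd z)) \<partial>((\<pi>1 \<Otimes>\<^sub>M \<pi>2) \<Otimes>\<^sub>M (\<pi>1 \<Otimes>\<^sub>M \<pi>2)))
     \<le> ennreal ((1 + e1)^2) * (\<integral>\<^sup>+z. G z \<partial>(\<pi>2 \<Otimes>\<^sub>M \<pi>2))"
proof -
  define H where "H p = (\<integral>\<^sup>+p'. G (p, p') \<partial>\<pi>2)" for p
  have H[measurable]: "H \<in> borel_measurable \<pi>2"
    unfolding H_def using P2.borel_measurable_nn_integral_fst[OF G] by simp
  have "(\<integral>\<^sup>+z. w (fst z) * w (snd z) * G (snd (fst z), snd (snd z)) \<partial>((\<pi>1 \<Otimes>\<^sub>M \<pi>2) \<Otimes>\<^sub>M (\<pi>1 \<Otimes>\<^sub>M \<pi>2)))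
      = (\<integral>\<^sup>+q. \<integral>\<^sup>+q'. w q * w q' * G (snd q, snd q') \<partial>(\<pi>1 \<Otimes>\<^sub>M \<pi>2) \<partial>(\<pi>1 \<Otimes>\<^sub>M \<pi>2))"
    using sigma_finite_measure.nn_integral_fst[OF prob_space_imp_sigma_finite[OF pP], of "\<lambda>z. w (fst z) * w (snd z) * G (snd (fst z), snd (snd z))" "\<pi>1 \<Otimes>\<^sub>M \<pi>2"]
    by simp
  also have "\<dots> \<le> (\<integral>\<^sup>+q. ennreal (1 + e1) * (w q * H (snd q)) \<partial>(\<pi>1 \<Otimes>\<^sub>M \<pi>2))"
  proof (intro nn_integral_mono)
    fix q assume q: "q \<in> space (\<pi>1 \<Otimes>\<^sub>M \<pi>2)"
    then have fq: "snd q \<in> space \<pi>2" by (auto simp: space_pair_measure)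
    have "(\<integral>\<^sup>+q'. w q * w q' * G (snd q, snd q') \<partial>(\<pi>1 \<Otimes>\<^sub>M \<pi>2))
        = (\<integral>\<^sup>+q'. w q' * (w q * G (snd q, snd q')) \<partial>(\<pi>1 \<Otimes>\<^sub>M \<pi>2))" by (simp add: mult_ac)
    also have "\<dots> = (\<integral>\<^sup>+p'. (w q * G (snd q, p')) * r2 (fst p') \<partial>\<pi>2)"
      by (rule int_snd[of "\<lambda>p'. w q * G (snd q, p')"]) (use fq in measurable)
    also have "\<dots> \<le> (\<integral>\<^sup>+p'. (w q * ennreal (1 + e1)) * G (snd q, p') \<partial>\<pi>2)"
    proof (intro nn_integral_mono)
      fix p'
      have "(w q * G (snd q, p')) * r2 (fst p') \<le> (w q * G (snd q, p')) * ennreal (1 + e1)"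
        by (rule mult_left_mono[OF r2_le]) simp
      then show "(w q * G (snd q, p')) * r2 (fst p') \<le> (w q * ennreal (1 + e1)) * G (snd q, p')"
        by (simp add: mult_ac)
    qed
    also have "\<dots> = (w q * ennreal (1 + e1)) * H (snd q)"
      unfolding H_def by (rule nn_integral_cmult) (use fq in measurable)
    finally show "(\<integral>\<^sup>+q'. w q * w q' * G (snd q, snd q') \<partial>(\<pi>1 \<Otimes>\<^sub>M \<pi>2)) \<le> ennreal (1 + e1) * (w q * H (snd q))"
      by (simp add: mult_ac)
  qed
  also have "\<dots> = ennreal (1 + e1) * (\<integral>\<^sup>+q. w q * H (snd q) \<partial>(\<pi>1 \<Otimes>\<^sub>M \<pi>2))"
    by (rule nn_integral_cmult) measurable
  finally have A: "(\<integral>\<^sup>+z. w (fst z) * w (snd z) * G (snd (fst z), snd (snd z)) \<partial>((\<pi>1 \<Otimes>\<^sub>M \<pi>2) \<Otimes>\<^sub>M (\<pi>1 \<Otimes>\<^sub>M \<pi>2)))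
     \<le> ennreal (1 + e1) * (\<integral>\<^sup>+q. w q * H (snd q) \<partial>(\<pi>1 \<Otimes>\<^sub>M \<pi>2))" .
  have "(\<integral>\<^sup>+q. w q * H (snd q) \<partial>(\<pi>1 \<Otimes>\<^sub>M \<pi>2)) = (\<integral>\<^sup>+p. H p * r2 (fst p) \<partial>\<pi>2)"
    by (rule int_snd[OF H])
  also have "\<dots> \<le> (\<integral>\<^sup>+p. ennreal (1 + e1) * H p \<partial>\<pi>2)"
    by (intro nn_integral_mono) (simp add: mult.commute mult_left_mono r2_le)
  also have "\<dots> = ennreal (1 + e1) * (\<integral>\<^sup>+p. H p \<partial>\<pi>2)"
    by (rule nn_integral_cmult) measurable
  also have "(\<integral>\<^sup>+p. H p \<partial>\<pi>2) = (\<integral>\<^sup>+z. G z \<partial>(\<pi>2 \<Otimes>\<^sub>M \<pi>2))"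
    unfolding H_def by (rule P2.nn_integral_fst[OF G])
  finally have B: "(\<integral>\<^sup>+q. w q * H (snd q) \<partial>(\<pi>1 \<Otimes>\<^sub>M \<pi>2)) \<le> ennreal (1 + e1) * (\<integral>\<^sup>+z. G z \<partial>(\<pi>2 \<Otimes>\<^sub>M \<pi>2))" .
  have eq: "ennreal ((1 + e1)^2) = ennreal (1 + e1) * ennreal (1 + e1)"
    unfolding power2_eq_square by (rule ennreal_mult) (use e1 in auto)
  from A have "(\<integral>\<^sup>+z. w (fst z) * w (snd z) * G (snd (fst z), snd (snd z)) \<partial>((\<pi>1 \<Otimes>\<^sub>M \<pi>2) \<Otimes>\<^sub>M (\<pi>1 \<Otimes>\<^sub>M \<pi>2)))
     \<le> ennreal (1 + e1) * (ennreal (1 + e1) * (\<integral>\<^sup>+z. G z \<partial>(\<pi>2 \<Otimes>\<^sub>M \<pi>2)))"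
    by (rule order_trans) (rule mult_left_mono[OF B], simp)
  then show ?thesis unfolding eq mult.assoc .
qed


lemma w_nz:
  assumes "w q \<noteq> 0"
  shows "dist (snd (fst q)) (fst (snd q)) \<le> \<delta>"
proof -
  obtain i where i: "i \<in> {..<n}"
    "ennreal (c i) * indicator (B i) (snd (fst q)) * indicator (B i) (fst (snd q)) \<noteq> (0::ennreal)"
    using assms unfolding w_def by (meson sum.not_neutral_contains_not_neutral)
  then have "snd (fst q) \<in> B i" "fst (snd q) \<in> B i" by (auto simp: indicator_def split: if_splits)
  then show ?thesis by (rule B_diam)
qed

lemma abs3: "\<bar>x1 - x4\<bar> \<le> \<bar>x1 - x2\<bar> + \<bar>x2 - x3\<bar> + \<bar>x3 - (x4::real)\<bar>"
  by linarith

lemma dist_bound: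
  assumes "w q \<noteq> 0" "w q' \<noteq> 0"
  shows "distortion (mp q, mp q') \<le> distortion (fst q, fst q') + 2 * \<delta> + distortion (snd q, snd q')"
proof -
  have "\<bar>dist (snd (fst q)) (snd (fst q')) - dist (fst (snd q)) (fst (snd q'))\<bar>
      \<le> dist (snd (fst q)) (fst (snd q)) + dist (snd (fst q')) (fst (snd q'))"
    by (rule abs_dist_diff)
  also have "\<dots> \<le> 2 * \<delta>" using w_nz[OF assms(1)] w_nz[OF assms(2)] by linarith
  finally have m: "\<bar>dist (snd (fst q)) (snd (fst q')) - dist (fst (snd q)) (fst (snd q'))\<bar> \<le> 2 * \<delta>" .
  show ?thesis unfolding distortion_def mp_def
    using abs3[of "dist (fst (fst q)) (fst (fst q'))" "dist (snd (snd q)) (snd (snd q'))"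
       "dist (snd (fst q)) (snd (fst q'))" "dist (fst (snd q)) (fst (snd q'))"] m
    by simp
qed

lemma gg_distr: "\<gamma> \<Otimes>\<^sub>M \<gamma> = distr (\<Gamma> \<Otimes>\<^sub>M \<Gamma>) (borel \<Otimes>\<^sub>M borel) (\<lambda>(x, y). (mp x, mp y))"
  unfolding \<gamma>_def
  by (rule pair_measure_distr[OF mp_meas' mp_meas'])
     (use \<gamma>_prob[unfolded \<gamma>_def] in \<open>simp add: prob_space_imp_sigma_finite\<close>)

lemma GG_density: "\<Gamma> \<Otimes>\<^sub>M \<Gamma> = density ((\<pi>1 \<Otimes>\<^sub>M \<pi>2) \<Otimes>\<^sub>M (\<pi>1 \<Otimes>\<^sub>M \<pi>2)) (\<lambda>(x, y). w x * w y)"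
  unfolding \<Gamma>_def
  by (rule pair_measure_density) (auto simp: prob_space_imp_sigma_finite pP \<Gamma>_prob[unfolded \<Gamma>_def])

lemma GG_prob: "prob_space (\<Gamma> \<Otimes>\<^sub>M \<Gamma>)" by (rule prob_space_pair[OF \<Gamma>_prob \<Gamma>_prob])

lemma W_meas[measurable]: "(\<lambda>z. w (fst z) * w (snd z)) \<in> borel_measurable ((\<pi>1 \<Otimes>\<^sub>M \<pi>2) \<Otimes>\<^sub>M (\<pi>1 \<Otimes>\<^sub>M \<pi>2))"
  by measurable

lemma W_total: "(\<integral>\<^sup>+z. w (fst z) * w (snd z) \<partial>((\<pi>1 \<Otimes>\<^sub>M \<pi>2) \<Otimes>\<^sub>M (\<pi>1 \<Otimes>\<^sub>M \<pi>2))) = 1"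
proof -
  have "1 = emeasure (\<Gamma> \<Otimes>\<^sub>M \<Gamma>) (space (\<Gamma> \<Otimes>\<^sub>M \<Gamma>))"
    using prob_space.emeasure_space_1[OF GG_prob] by simp
  also have "\<dots> = (\<integral>\<^sup>+z. (\<lambda>(x, y). w x * w y) z * indicator (space ((\<pi>1 \<Otimes>\<^sub>M \<pi>2) \<Otimes>\<^sub>M (\<pi>1 \<Otimes>\<^sub>M \<pi>2))) z
       \<partial>((\<pi>1 \<Otimes>\<^sub>M \<pi>2) \<Otimes>\<^sub>M (\<pi>1 \<Otimes>\<^sub>M \<pi>2)))"
    unfolding GG_density by (subst emeasure_density) (auto simp: case_prod_beta)
  also have "\<dots> = (\<integral>\<^sup>+z. w (fst z) * w (snd z) \<partial>((\<pi>1 \<Otimes>\<^sub>M \<pi>2) \<Otimes>\<^sub>M (\<pi>1 \<Otimes>\<^sub>M \<pi>2)))"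
    by (intro nn_integral_cong) (auto simp: case_prod_beta)
  finally show ?thesis by simp
qed


end

lemma bdd_dist:
  assumes "compact (UNIV::'a::metric_space set)"
  shows "\<exists>K\<ge>0. \<forall>x y::'a. dist x y \<le> K"
proof -
  obtain a :: 'a where True by blast
  have "bounded (UNIV::'a set)" using compact_imp_bounded[OF assms] .
  then obtain e where e: "\<forall>y. dist a y \<le> e" unfolding bounded_any_center[of _ a] by auto
  have "dist x y \<le> 2 * e" for x y :: 'a
    using dist_triangle3[of x y a] e[rule_format, of x] e[rule_format, of y] by linarith
  moreover have "0 \<le> 2 * e" using e[rule_format, of a] by simp
  ultimately show ?thesis by blast
qed

lemma distortion_bdd:
  assumes "compact (UNIV::'a::metric_space set)" "compact (UNIV::'b::metric_space set)"
  shows "\<exists>K\<ge>0. \<forall>z::('a \<times> 'b) \<times> ('a \<times> 'b). distortion z \<le> K"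
proof -
  obtain KA where KA: "KA \<ge> 0" "\<forall>x y::'a. dist x y \<le> KA" using bdd_dist[OF assms(1)] by blast
  obtain KB where KB: "KB \<ge> 0" "\<forall>x y::'b. dist x y \<le> KB" using bdd_dist[OF assms(2)] by blast
  have "distortion z \<le> KA + KB" for z :: "('a \<times> 'b) \<times> ('a \<times> 'b)"
    unfolding distortion_def using KA(2)[rule_format, of "fst (fst z)" "fst (snd z)"]
      KB(2)[rule_format, of "snd (fst z)" "snd (snd z)"]
      zero_le_dist[of "fst (fst z)" "fst (snd z)"] zero_le_dist[of "snd (fst z)" "snd (snd z)"]
    by linarith
  then show ?thesis using KA KB by (intro exI[of _ "KA + KB"]) auto
qed

lemma distortion_nonneg: "0 \<le> distortion z" unfolding distortion_def by simp

lemma Ifin: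
  fixes \<pi> :: "('a::metric_space \<times> 'b::metric_space) measure"
  assumes cA: "compact (UNIV::'a set)" and cB: "compact (UNIV::'b set)"
    and p: "prob_space \<pi>" and s: "sets \<pi> = sets borel" and q: "0 \<le> q"
  shows "(\<integral>\<^sup>+z. ennreal (distortion z powr q) \<partial>(\<pi> \<Otimes>\<^sub>M \<pi>)) < \<infinity>"
proof -
  obtain K where K: "K \<ge> 0" "\<forall>z::('a \<times> 'b) \<times> ('a \<times> 'b). distortion z \<le> K"
    using distortion_bdd[OF cA cB] by blast
  interpret PP: prob_space "\<pi> \<Otimes>\<^sub>M \<pi>" by (rule prob_space_pair[OF p p])
  have "(\<integral>\<^sup>+z. ennreal (distortion z powr q) \<partial>(\<pi> \<Otimes>\<^sub>M \<pi>)) \<le> (\<integral>\<^sup>+z. ennreal (K powr q) \<partial>(\<pi> \<Otimes>\<^sub>M \<pi>))"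
    using K q by (intro nn_integral_mono ennreal_leI powr_mono2) (auto simp: distortion_nonneg)
  also have "\<dots> = ennreal (K powr q)" by (simp add: PP.emeasure_space_1)
  finally show ?thesis by (simp add: le_less_trans)
qed

lemma I_eq:
  fixes \<pi> :: "('a::metric_space \<times> 'b::metric_space) measure"
  assumes cA: "compact (UNIV::'a set)" and cB: "compact (UNIV::'b set)"
    and p: "prob_space \<pi>" and s: "sets \<pi> = sets borel" and pt: "p \<noteq> \<top>" and q: "1 \<le> enn2real p"
  shows "(\<integral>\<^sup>+z. ennreal (distortion z powr enn2real p) \<partial>(\<pi> \<Otimes>\<^sub>M \<pi>)) = ennreal (dis_norm p \<pi> powr enn2real p)"
proof -
  define I where "I = (\<integral>\<^sup>+z. ennreal (distortion z powr enn2real p) \<partial>(\<pi> \<Otimes>\<^sub>M \<pi>))"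
  have fin: "I < \<infinity>" unfolding I_def by (rule Ifin[OF cA cB p s]) (use q in simp)
  have "dis_norm p \<pi> = enn2real I powr (1 / enn2real p)" unfolding dis_norm_def I_def using pt by simp
  then have "dis_norm p \<pi> powr enn2real p = enn2real I powr (1 / enn2real p * enn2real p)"
    by (simp add: powr_powr)
  also have "\<dots> = enn2real I" using q by simp
  finally show ?thesis using fin unfolding I_def[symmetric] by simp
qed


context glue begin

lemma dist1_meas[measurable]: "distortion \<in> borel_measurable (\<pi>1 \<Otimes>\<^sub>M \<pi>1)"
  by (rule distortion_meas[OF cX cY s1])
lemma dist2_meas[measurable]: "distortion \<in> borel_measurable (\<pi>2 \<Otimes>\<^sub>M \<pi>2)"
  by (rule distortion_meas[OF cY cZ s2])
lemma distg_meas[measurable]: "distortion \<in> borel_measurable (borel \<Otimes>\<^sub>M (borel :: ('a \<times> 'c) measure))"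
  by (rule distortion_meas[OF cX cZ]) simp
lemma distgg_meas[measurable]: "distortion \<in> borel_measurable (\<gamma> \<Otimes>\<^sub>M \<gamma>)"
  by (rule distortion_meas[OF cX cZ sets_\<gamma>])

lemma TT_meas[measurable]: "(\<lambda>(x, y). (mp x, mp y)) \<in> measurable (\<Gamma> \<Otimes>\<^sub>M \<Gamma>) (borel \<Otimes>\<^sub>M borel)"
  using mp_meas' by measurable

lemma TT_meas'[measurable]: "(\<lambda>(x, y). (mp x, mp y)) \<in> measurable ((\<pi>1 \<Otimes>\<^sub>M \<pi>2) \<Otimes>\<^sub>M (\<pi>1 \<Otimes>\<^sub>M \<pi>2)) (borel \<Otimes>\<^sub>M borel)"
  by measurable

lemma Igamma:
  "(\<integral>\<^sup>+z. ennreal (distortion z powr r) \<partial>(\<gamma> \<Otimes>\<^sub>M \<gamma>)) =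
   (\<integral>\<^sup>+z. (w (fst z) * w (snd z)) * ennreal (distortion (mp (fst z), mp (snd z)) powr r) \<partial>((\<pi>1 \<Otimes>\<^sub>M \<pi>2) \<Otimes>\<^sub>M (\<pi>1 \<Otimes>\<^sub>M \<pi>2)))"
proof -
  have "(\<integral>\<^sup>+z. ennreal (distortion z powr r) \<partial>(\<gamma> \<Otimes>\<^sub>M \<gamma>)) =
      (\<integral>\<^sup>+z. ennreal (distortion ((\<lambda>(x, y). (mp x, mp y)) z) powr r) \<partial>(\<Gamma> \<Otimes>\<^sub>M \<Gamma>))"
    unfolding gg_distr by (rule nn_integral_distr) measurable
  also have "\<dots> = (\<integral>\<^sup>+z. (\<lambda>(x, y). w x * w y) z * ennreal (distortion ((\<lambda>(x, y). (mp x, mp y)) z) powr r)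
      \<partial>((\<pi>1 \<Otimes>\<^sub>M \<pi>2) \<Otimes>\<^sub>M (\<pi>1 \<Otimes>\<^sub>M \<pi>2)))"
    unfolding GG_density by (rule nn_integral_density) measurable
  finally show ?thesis by (simp add: case_prod_beta)
qed

end

context glue begin

lemma finite_bound:
  assumes pt: "p \<noteq> \<top>" and p1': "1 \<le> p"
  shows "dis_norm p \<gamma> \<le> pfactor p e2 * dis_norm p \<pi>1 + pfactor p e1 * dis_norm p \<pi>2 + 4 * \<delta>"
proof -
  define q where "q = enn2real p"
  have q: "1 \<le> q" using enn2real_mono[OF p1'] pt unfolding q_def by (simp add: top.not_eq_extremum)
  define A1 where "A1 = dis_norm p \<pi>1"
  define A2 where "A2 = dis_norm p \<pi>2"
  have A1: "0 \<le> A1" and A2: "0 \<le> A2" unfolding A1_def A2_def dis_norm_def using pt by auto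
  define f1 where "f1 = pfactor p e1"
  define f2 where "f2 = pfactor p e2"
  have f1d: "f1 = (1 + e1) powr (2 / q)" unfolding f1_def pfactor_def q_def using pt by simp
  have f2d: "f2 = (1 + e2) powr (2 / q)" unfolding f2_def pfactor_def q_def using pt by simp
  have f1: "0 \<le> f1" and f2: "0 \<le> f2" unfolding f1d f2d by auto
  have f1q: "f1 powr q = (1 + e1)^2" unfolding f1d using q e1 by (simp add: powr_powr)
  have f2q: "f2 powr q = (1 + e2)^2" unfolding f2d using q e2 by (simp add: powr_powr)
  define a1 where "a1 = f2 * A1"
  define a3 where "a3 = f1 * A2"
  have a1: "0 \<le> a1" and a3: "0 \<le> a3" unfolding a1_def a3_def using f1 f2 A1 A2 by auto
  define \<alpha>1 where "\<alpha>1 = a1 + \<delta>"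
  define \<alpha>2 where "\<alpha>2 = 2 * \<delta>"
  define \<alpha>3 where "\<alpha>3 = a3 + \<delta>"
  define S where "S = \<alpha>1 + \<alpha>2 + \<alpha>3"
  have \<alpha>: "0 < \<alpha>1" "0 < \<alpha>2" "0 < \<alpha>3" unfolding \<alpha>1_def \<alpha>2_def \<alpha>3_def using a1 a3 dpos by auto
  have S: "0 < S" using \<alpha> unfolding S_def by simp
  define l1 where "l1 = \<alpha>1 / S"
  define l2 where "l2 = \<alpha>2 / S"
  define l3 where "l3 = \<alpha>3 / S"
  have "l1 + l2 + l3 = (\<alpha>1 + \<alpha>2 + \<alpha>3) / S" unfolding l1_def l2_def l3_def by (simp add: add_divide_distrib)
  then have l4: "l1 + l2 + l3 = 1" using S unfolding S_def by simp
  have l: "0 < l1" "0 < l2" "0 < l3" "l1 + l2 + l3 = 1"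
    unfolding l1_def l2_def l3_def using \<alpha> S l4 by (auto simp: l1_def l2_def l3_def)
  define L1 where "L1 = l1 powr (1 - q)"
  define L2 where "L2 = l2 powr (1 - q)"
  define L3 where "L3 = l3 powr (1 - q)"
  have L: "0 \<le> L1" "0 \<le> L2" "0 \<le> L3" unfolding L1_def L2_def L3_def by auto
  define c2 where "c2 = L2 * (2 * \<delta>) powr q"
  have c2: "0 \<le> c2" unfolding c2_def using L by auto
  define PP where "PP = (\<pi>1 \<Otimes>\<^sub>M \<pi>2) \<Otimes>\<^sub>M (\<pi>1 \<Otimes>\<^sub>M \<pi>2)"
  define W where "W z = w (fst z) * w (snd z)" for z
  define D1 where "D1 z = distortion (fst (fst z), fst (snd z)) powr q" for z :: "(('a \<times> 'b) \<times> ('b \<times> 'c)) \<times> (('a \<times> 'b) \<times> ('b \<times> 'c))"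
  define D3 where "D3 z = distortion (snd (fst z), snd (snd z)) powr q" for z :: "(('a \<times> 'b) \<times> ('b \<times> 'c)) \<times> (('a \<times> 'b) \<times> ('b \<times> 'c))"
  have D1: "0 \<le> D1 z" and D3: "0 \<le> D3 z" for z unfolding D1_def D3_def by auto
  have W_meas[measurable]: "W \<in> borel_measurable PP" unfolding W_def PP_def by measurable
  have D1_meas[measurable]: "(\<lambda>z. ennreal (D1 z)) \<in> borel_measurable PP" unfolding D1_def PP_def by measurable
  have D3_meas[measurable]: "(\<lambda>z. ennreal (D3 z)) \<in> borel_measurable PP" unfolding D3_def PP_def by measurable
  define R where "R = L1 * ((1 + e2)^2 * A1 powr q) + c2 + L3 * ((1 + e1)^2 * A2 powr q)"
  have I1: "(\<integral>\<^sup>+z. ennreal (distortion z powr q) \<partial>(\<pi>1 \<Otimes>\<^sub>M \<pi>1)) = ennreal (A1 powr q)"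
    unfolding A1_def q_def by (rule I_eq[OF cX cY p1 s1 pt]) (use q in \<open>simp add: q_def\<close>)
  have I2: "(\<integral>\<^sup>+z. ennreal (distortion z powr q) \<partial>(\<pi>2 \<Otimes>\<^sub>M \<pi>2)) = ennreal (A2 powr q)"
    unfolding A2_def q_def by (rule I_eq[OF cY cZ p2 s2 pt]) (use q in \<open>simp add: q_def\<close>)
  have "(\<integral>\<^sup>+z. ennreal (distortion z powr q) \<partial>(\<gamma> \<Otimes>\<^sub>M \<gamma>))
      = (\<integral>\<^sup>+z. W z * ennreal (distortion (mp (fst z), mp (snd z)) powr q) \<partial>PP)"
    unfolding W_def PP_def by (rule Igamma)
  also have "\<dots> \<le> (\<integral>\<^sup>+z. W z * ennreal (L1 * D1 z + c2 + L3 * D3 z) \<partial>PP)"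
  proof (intro nn_integral_mono)
    fix z
    show "W z * ennreal (distortion (mp (fst z), mp (snd z)) powr q) \<le> W z * ennreal (L1 * D1 z + c2 + L3 * D3 z)"
    proof (cases "W z = 0")
      case False
      then have nz: "w (fst z) \<noteq> 0" "w (snd z) \<noteq> 0" unfolding W_def by auto
      have "distortion (mp (fst z), mp (snd z)) powr q
          \<le> (distortion (fst (fst z), fst (snd z)) + 2 * \<delta> + distortion (snd (fst z), snd (snd z))) powr q"
        using dist_bound[OF nz] q by (intro powr_mono2) (auto simp: distortion_nonneg)
      also have "\<dots> \<le> L1 * D1 z + c2 + L3 * D3 z"
        unfolding L1_def D1_def c2_def L2_def L3_def D3_def
        using conv3[OF distortion_nonneg _ distortion_nonneg l q, of "2 * \<delta>"] dpos by simp
      finally show ?thesis by (intro mult_left_mono ennreal_leI) auto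
    qed simp
  qed
  also have "\<dots> = (\<integral>\<^sup>+z. ennreal L1 * (W z * ennreal (D1 z)) + ennreal c2 * W z + ennreal L3 * (W z * ennreal (D3 z)) \<partial>PP)"
    by (intro nn_integral_cong) (simp add: L c2 D1 D3 ennreal_mult distrib_left mult_ac)
  also have "\<dots> = ennreal L1 * (\<integral>\<^sup>+z. W z * ennreal (D1 z) \<partial>PP) + ennreal c2 * (\<integral>\<^sup>+z. W z \<partial>PP)
      + ennreal L3 * (\<integral>\<^sup>+z. W z * ennreal (D3 z) \<partial>PP)"
    by (simp add: nn_integral_add nn_integral_cmult)
  also have "\<dots> \<le> ennreal L1 * (ennreal ((1 + e2)^2) * ennreal (A1 powr q)) + ennreal c2 * 1
      + ennreal L3 * (ennreal ((1 + e1)^2) * ennreal (A2 powr q))"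
  proof (intro add_mono mult_left_mono order.refl)
    show "(\<integral>\<^sup>+z. W z * ennreal (D1 z) \<partial>PP) \<le> ennreal ((1 + e2)^2) * ennreal (A1 powr q)"
      using dbl_fst[of "\<lambda>z. ennreal (distortion z powr q)"] unfolding I1 W_def D1_def PP_def
      by (simp add: mult_ac)
    show "(\<integral>\<^sup>+z. W z * ennreal (D3 z) \<partial>PP) \<le> ennreal ((1 + e1)^2) * ennreal (A2 powr q)"
      using dbl_snd[of "\<lambda>z. ennreal (distortion z powr q)"] unfolding I2 W_def D3_def PP_def
      by (simp add: mult_ac)
    show "(\<integral>\<^sup>+z. W z \<partial>PP) \<le> 1" unfolding W_def PP_def using W_total by simp
  qed auto
  also have "\<dots> = ennreal R"
    unfolding R_def using L c2 e1 e2 A1 A2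
    by (simp add: ennreal_mult)
  finally have Ig: "(\<integral>\<^sup>+z. ennreal (distortion z powr q) \<partial>(\<gamma> \<Otimes>\<^sub>M \<gamma>)) \<le> ennreal R" .
  have "R = L1 * a1 powr q + L2 * \<alpha>2 powr q + L3 * a3 powr q"
    unfolding R_def c2_def a1_def a3_def \<alpha>2_def using f1 f2 A1 A2
    by (simp add: powr_mult f1q f2q)
  also have "\<dots> \<le> S powr q"
    unfolding L1_def L2_def L3_def l1_def l2_def l3_def S_def
    by (rule mink3[OF \<alpha>]) (use a1 a3 dpos q in \<open>auto simp: \<alpha>1_def \<alpha>3_def \<alpha>2_def\<close>)
  finally have RS: "R \<le> S powr q" .
  have "dis_norm p \<gamma> = enn2real (\<integral>\<^sup>+z. ennreal (distortion z powr q) \<partial>(\<gamma> \<Otimes>\<^sub>M \<gamma>)) powr (1 / q)"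
    unfolding dis_norm_def q_def using pt by simp
  also have "\<dots> \<le> (S powr q) powr (1 / q)"
    using Ig RS S q by (intro powr_mono2 enn2real_leI) (auto intro: order_trans)
  also have "\<dots> = S" using S q by (simp add: powr_powr)
  also have "S = f2 * A1 + f1 * A2 + 4 * \<delta>"
    unfolding S_def \<alpha>1_def \<alpha>2_def \<alpha>3_def a1_def a3_def by simp
  finally show ?thesis unfolding f1_def f2_def A1_def A2_def .
qed

end

lemma esssup_fin:
  fixes \<pi> :: "('a::metric_space \<times> 'b::metric_space) measure"
  assumes cA: "compact (UNIV::'a set)" and cB: "compact (UNIV::'b set)"
    and p: "prob_space \<pi>" and s: "sets \<pi> = sets borel"
  shows "esssup (\<pi> \<Otimes>\<^sub>M \<pi>) (\<lambda>z. ereal (distortion z)) = ereal (dis_norm \<top> \<pi>)" "0 \<le> dis_norm \<top> \<pi>"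
proof -
  obtain K where K: "K \<ge> 0" "\<forall>z::('a \<times> 'b) \<times> ('a \<times> 'b). distortion z \<le> K"
    using distortion_bdd[OF cA cB] by blast
  interpret PP: prob_space "\<pi> \<Otimes>\<^sub>M \<pi>" by (rule prob_space_pair[OF p p])
  have dm[measurable]: "distortion \<in> borel_measurable (\<pi> \<Otimes>\<^sub>M \<pi>)" by (rule distortion_meas[OF cA cB s])
  define E where "E = esssup (\<pi> \<Otimes>\<^sub>M \<pi>) (\<lambda>z. ereal (distortion z))"
  have "E \<le> ereal K" unfolding E_def by (rule esssup_I) (use K in auto)
  moreover have "0 \<le> E"
  proof -
    have "esssup (\<pi> \<Otimes>\<^sub>M \<pi>) (\<lambda>z. 0) \<le> E" unfolding E_def
      by (rule esssup_AE_mono) (auto simp: distortion_nonneg)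
    moreover have "esssup (\<pi> \<Otimes>\<^sub>M \<pi>) (\<lambda>z. 0::ereal) = 0" by (rule esssup_const) (simp add: PP.emeasure_space_1)
    ultimately show ?thesis by simp
  qed
  ultimately have fin: "\<bar>E\<bar> \<noteq> \<infinity>" by auto
  have dn: "dis_norm \<top> \<pi> = real_of_ereal E" unfolding dis_norm_def E_def by simp
  show "esssup (\<pi> \<Otimes>\<^sub>M \<pi>) (\<lambda>z. ereal (distortion z)) = ereal (dis_norm \<top> \<pi>)"
    unfolding dn E_def[symmetric] using ereal_real'[OF fin] by simp
  show "0 \<le> dis_norm \<top> \<pi>" unfolding dn using \<open>0 \<le> E\<close> by (simp add: real_of_ereal_pos)
qed

lemma null_dist:
  fixes \<pi> :: "('a::metric_space \<times> 'b::metric_space) measure"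
  assumes cA: "compact (UNIV::'a set)" and cB: "compact (UNIV::'b set)"
    and p: "prob_space \<pi>" and s: "sets \<pi> = sets borel"
  defines "N \<equiv> {z \<in> space (\<pi> \<Otimes>\<^sub>M \<pi>). dis_norm \<top> \<pi> < distortion z}"
  shows "N \<in> sets (\<pi> \<Otimes>\<^sub>M \<pi>)" "emeasure (\<pi> \<Otimes>\<^sub>M \<pi>) N = 0"
proof -
  have dm[measurable]: "distortion \<in> borel_measurable (\<pi> \<Otimes>\<^sub>M \<pi>)" by (rule distortion_meas[OF cA cB s])
  show N: "N \<in> sets (\<pi> \<Otimes>\<^sub>M \<pi>)" unfolding N_def by measurable
  have "AE z in \<pi> \<Otimes>\<^sub>M \<pi>. ereal (distortion z) \<le> esssup (\<pi> \<Otimes>\<^sub>M \<pi>) (\<lambda>z. ereal (distortion z))"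
    by (rule esssup_AE)
  then have "AE z in \<pi> \<Otimes>\<^sub>M \<pi>. distortion z \<le> dis_norm \<top> \<pi>"
    unfolding esssup_fin(1)[OF cA cB p s] by simp
  then show "emeasure (\<pi> \<Otimes>\<^sub>M \<pi>) N = 0"
    by (subst (asm) AE_iff_measurable[OF N]) (auto simp: N_def not_le)
qed

context glue begin

lemma infinite_bound:
  "dis_norm \<top> \<gamma> \<le> dis_norm \<top> \<pi>1 + dis_norm \<top> \<pi>2 + 2 * \<delta>"
proof -
  define A1 where "A1 = dis_norm \<top> \<pi>1"
  define A2 where "A2 = dis_norm \<top> \<pi>2"
  have A1: "0 \<le> A1" unfolding A1_def by (rule esssup_fin(2)[OF cX cY p1 s1])
  have A2: "0 \<le> A2" unfolding A2_def by (rule esssup_fin(2)[OF cY cZ p2 s2])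
  define PP where "PP = (\<pi>1 \<Otimes>\<^sub>M \<pi>2) \<Otimes>\<^sub>M (\<pi>1 \<Otimes>\<^sub>M \<pi>2)"
  define W where "W z = w (fst z) * w (snd z)" for z
  have W_meas[measurable]: "W \<in> borel_measurable PP" unfolding W_def PP_def by measurable
  define N1 where "N1 = {z \<in> space (\<pi>1 \<Otimes>\<^sub>M \<pi>1). A1 < distortion z}"
  define N2 where "N2 = {z \<in> space (\<pi>2 \<Otimes>\<^sub>M \<pi>2). A2 < distortion z}"
  have N1: "N1 \<in> sets (\<pi>1 \<Otimes>\<^sub>M \<pi>1)" "emeasure (\<pi>1 \<Otimes>\<^sub>M \<pi>1) N1 = 0"
    unfolding N1_def A1_def using null_dist[OF cX cY p1 s1] by auto
  have N2: "N2 \<in> sets (\<pi>2 \<Otimes>\<^sub>M \<pi>2)" "emeasure (\<pi>2 \<Otimes>\<^sub>M \<pi>2) N2 = 0"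
    unfolding N2_def A2_def using null_dist[OF cY cZ p2 s2] by auto
  have "(\<integral>\<^sup>+z. W z * indicator N1 (fst (fst z), fst (snd z)) \<partial>PP) \<le> ennreal ((1 + e2)^2) * (\<integral>\<^sup>+z. indicator N1 z \<partial>(\<pi>1 \<Otimes>\<^sub>M \<pi>1))"
    unfolding W_def PP_def by (rule dbl_fst) (use N1 in measurable)
  also have "\<dots> = 0" using N1 by simp
  finally have "(\<integral>\<^sup>+z. W z * indicator N1 (fst (fst z), fst (snd z)) \<partial>PP) = 0" by simp
  have ae1: "AE z in PP. W z * indicator N1 (fst (fst z), fst (snd z)) = 0"
  proof -
    have m: "(\<lambda>z. W z * indicator N1 (fst (fst z), fst (snd z))) \<in> borel_measurable PP"
      unfolding PP_def W_def using N1 by measurable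
    show ?thesis using nn_integral_0_iff_AE[OF m] \<open>(\<integral>\<^sup>+z. W z * indicator N1 (fst (fst z), fst (snd z)) \<partial>PP) = 0\<close> by simp
  qed
  have "(\<integral>\<^sup>+z. W z * indicator N2 (snd (fst z), snd (snd z)) \<partial>PP) \<le> ennreal ((1 + e1)^2) * (\<integral>\<^sup>+z. indicator N2 z \<partial>(\<pi>2 \<Otimes>\<^sub>M \<pi>2))"
    unfolding W_def PP_def by (rule dbl_snd) (use N2 in measurable)
  also have "\<dots> = 0" using N2 by simp
  finally have "(\<integral>\<^sup>+z. W z * indicator N2 (snd (fst z), snd (snd z)) \<partial>PP) = 0" by simp
  have ae2: "AE z in PP. W z * indicator N2 (snd (fst z), snd (snd z)) = 0"
  proof -
    have m: "(\<lambda>z. W z * indicator N2 (snd (fst z), snd (snd z))) \<in> borel_measurable PP"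
      unfolding PP_def W_def using N2 by measurable
    show ?thesis using nn_integral_0_iff_AE[OF m] \<open>(\<integral>\<^sup>+z. W z * indicator N2 (snd (fst z), snd (snd z)) \<partial>PP) = 0\<close> by simp
  qed
  have "AE z in PP. 0 < W z \<longrightarrow> distortion (mp (fst z), mp (snd z)) \<le> A1 + 2 * \<delta> + A2"
    using ae1 ae2 AE_space
  proof eventually_elim
    case (elim z)
    show ?case
    proof
      assume "0 < W z"
      then have nz: "w (fst z) \<noteq> 0" "w (snd z) \<noteq> 0" "W z \<noteq> 0" unfolding W_def by auto
      have sp: "fst z \<in> space (\<pi>1 \<Otimes>\<^sub>M \<pi>2)" "snd z \<in> space (\<pi>1 \<Otimes>\<^sub>M \<pi>2)"
        using elim(3) unfolding PP_def by (auto simp: space_pair_measure)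
      then have sp1: "(fst (fst z), fst (snd z)) \<in> space (\<pi>1 \<Otimes>\<^sub>M \<pi>1)"
        and sp2: "(snd (fst z), snd (snd z)) \<in> space (\<pi>2 \<Otimes>\<^sub>M \<pi>2)"
        by (auto simp: space_pair_measure)
      have "(fst (fst z), fst (snd z)) \<notin> N1" using elim(1) nz(3) by (auto simp: indicator_def split: if_splits)
      then have d1: "distortion (fst (fst z), fst (snd z)) \<le> A1" using sp1 unfolding N1_def by auto
      have "(snd (fst z), snd (snd z)) \<notin> N2" using elim(2) nz(3) by (auto simp: indicator_def split: if_splits)
      then have d2: "distortion (snd (fst z), snd (snd z)) \<le> A2" using sp2 unfolding N2_def by auto
      show "distortion (mp (fst z), mp (snd z)) \<le> A1 + 2 * \<delta> + A2"
        using dist_bound[OF nz(1,2)] d1 d2 by linarith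
    qed
  qed
  then have "AE z in \<Gamma> \<Otimes>\<^sub>M \<Gamma>. distortion ((\<lambda>(x, y). (mp x, mp y)) z) \<le> A1 + 2 * \<delta> + A2"
    unfolding GG_density PP_def W_def
    by (subst AE_density) (auto simp: case_prod_beta)
  then have "AE z in \<gamma> \<Otimes>\<^sub>M \<gamma>. distortion z \<le> A1 + 2 * \<delta> + A2"
    unfolding gg_distr by (subst AE_distr_iff) auto
  then have "esssup (\<gamma> \<Otimes>\<^sub>M \<gamma>) (\<lambda>z. ereal (distortion z)) \<le> ereal (A1 + 2 * \<delta> + A2)"
    by (intro esssup_I) (auto elim: eventually_mono)
  moreover have "0 \<le> A1 + 2 * \<delta> + A2" using A1 A2 dpos by simp
  ultimately have "real_of_ereal (esssup (\<gamma> \<Otimes>\<^sub>M \<gamma>) (\<lambda>z. ereal (distortion z))) \<le> A1 + 2 * \<delta> + A2"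
    by (cases "esssup (\<gamma> \<Otimes>\<^sub>M \<gamma>) (\<lambda>z. ereal (distortion z))") auto
  then show ?thesis unfolding dis_norm_def A1_def A2_def by simp
qed

end

lemma distr_pair_snd':
  assumes "prob_space M" "prob_space N"
  shows "distr (M \<Otimes>\<^sub>M N) N snd = N"
proof (intro measure_eqI)
  interpret M: prob_space M by fact
  interpret N: prob_space N by fact
  interpret P: pair_sigma_finite M N by unfold_locales
  fix A assume A: "A \<in> sets (distr (M \<Otimes>\<^sub>M N) N snd)"
  from A have "emeasure (distr (M \<Otimes>\<^sub>M N) N snd) A = emeasure (M \<Otimes>\<^sub>M N) (space M \<times> A)"
    by (auto simp add: emeasure_distr space_pair_measure dest: sets.sets_into_space intro!: arg_cong2[where f=emeasure])
  moreover have "emeasure (M \<Otimes>\<^sub>M N) (space M \<times> A) = emeasure M (space M) * emeasure N A"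
    by (rule N.emeasure_pair_measure_Times) (use A in auto)
  ultimately show "emeasure (distr (M \<Otimes>\<^sub>M N) N snd) A = emeasure N A"
    by (simp add: M.emeasure_space_1)
qed simp

lemma distr_pair_fst':
  assumes "prob_space M" "prob_space N"
  shows "distr (M \<Otimes>\<^sub>M N) M fst = M"
  using prob_space.distr_pair_fst[OF assms(2)] .

lemma mutual_bdd_refl:
  assumes "prob_space \<mu>" "0 \<le> e"
  shows "mutual_bdd \<mu> \<mu> e"
proof -
  have fm: "finite_measure \<mu>" using assms(1) prob_space_def by blast
  have "1 \<le> ennreal (1 + e)" using assms(2) by simp
  then have le: "emeasure \<mu> A \<le> ennreal (1 + e) * emeasure \<mu> A" for A
    using mult_right_mono[of 1 "ennreal (1 + e)" "emeasure \<mu> A"] by simp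
  have "mutual_bdd \<mu> \<mu> (1 + e - 1)"
    by (rule mutual_bdd_I[OF fm fm refl]) (use assms(2) le in auto)
  then show ?thesis by simp
qed

lemma prod_in_sS:
  fixes \<mu> :: "'a::metric_space measure" and \<nu> :: "'b::metric_space measure"
  assumes "compact_pmm \<mu>" "compact_pmm \<nu>" "0 \<le> e1" "0 \<le> e2"
  shows "\<mu> \<Otimes>\<^sub>M \<nu> \<in> sS e1 e2 \<mu> \<nu>"
proof -
  have pm: "prob_space \<mu>" and sm: "sets \<mu> = sets borel" and cm: "compact (UNIV::'a set)"
    using assms(1) unfolding compact_pmm_def by auto
  have pn: "prob_space \<nu>" and sn: "sets \<nu> = sets borel" and cn: "compact (UNIV::'b set)"
    using assms(2) unfolding compact_pmm_def by auto
  have s: "sets (\<mu> \<Otimes>\<^sub>M \<nu>) = sets borel"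
  proof -
    have "sets (\<mu> \<Otimes>\<^sub>M \<nu>) = sets (borel \<Otimes>\<^sub>M borel :: ('a \<times> 'b) measure)"
      by (rule sets_pair_measure_cong) (use sm sn in auto)
    also have "\<dots> = sets borel" by (rule sets_borel_prod_compact[OF cm cn])
    finally show ?thesis .
  qed
  have d1: "distr (\<mu> \<Otimes>\<^sub>M \<nu>) borel fst = \<mu>"
  proof -
    have "distr (\<mu> \<Otimes>\<^sub>M \<nu>) borel fst = distr (\<mu> \<Otimes>\<^sub>M \<nu>) \<mu> fst"
      by (rule distr_cong) (use sm in auto)
    also have "\<dots> = \<mu>" by (rule distr_pair_fst'[OF pm pn])
    finally show ?thesis .
  qed
  have d2: "distr (\<mu> \<Otimes>\<^sub>M \<nu>) borel snd = \<nu>"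
  proof -
    have "distr (\<mu> \<Otimes>\<^sub>M \<nu>) borel snd = distr (\<mu> \<Otimes>\<^sub>M \<nu>) \<nu> snd"
      by (rule distr_cong) (use sn in auto)
    also have "\<dots> = \<nu>" by (rule distr_pair_snd'[OF pm pn])
    finally show ?thesis .
  qed
  show ?thesis unfolding sS_def
    using prob_space_pair[OF pm pn] s d1 d2 mutual_bdd_refl[OF pm assms(3)] mutual_bdd_refl[OF pn assms(4)]
    by simp
qed

lemma dis_norm_nonneg:
  fixes \<pi> :: "('a::metric_space \<times> 'b::metric_space) measure"
  assumes "compact (UNIV::'a set)" "compact (UNIV::'b set)" "prob_space \<pi>" "sets \<pi> = sets borel"
  shows "0 \<le> dis_norm p \<pi>"
proof (cases "p = \<top>")
  case True then show ?thesis using esssup_fin(2)[OF assms] by simp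
next
  case False then show ?thesis unfolding dis_norm_def by simp
qed

lemma glue_exists:
  fixes \<mu>X :: "'a::metric_space measure" and \<mu>Y :: "'b::metric_space measure"
    and \<mu>Z :: "'c::metric_space measure"
  assumes e1: "0 \<le> e1" and e2: "0 \<le> e2" and p: "1 \<le> p"
    and X: "compact_pmm \<mu>X" and Y: "compact_pmm \<mu>Y" and Z: "compact_pmm \<mu>Z"
    and pi1: "\<pi>1 \<in> sS e1 e2 \<mu>X \<mu>Y" and pi2: "\<pi>2 \<in> sS e1 e2 \<mu>Y \<mu>Z" and d: "0 < \<delta>"
  shows "\<exists>\<gamma>\<in>sS (e1 + e2 + e1 * e2) (e1 + e2 + e1 * e2) \<mu>X \<mu>Z.
           dis_norm p \<gamma> \<le> pfactor p e2 * dis_norm p \<pi>1 + pfactor p e1 * dis_norm p \<pi>2 + 4 * \<delta>"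
proof -
  have cX: "compact (UNIV::'a set)" and pX: "prob_space \<mu>X" and sX: "sets \<mu>X = sets borel"
    using X unfolding compact_pmm_def by auto
  have cY: "compact (UNIV::'b set)" and pY: "prob_space \<mu>Y" and sY: "sets \<mu>Y = sets borel"
    using Y unfolding compact_pmm_def by auto
  have cZ: "compact (UNIV::'c set)" and pZ: "prob_space \<mu>Z" and sZ: "sets \<mu>Z = sets borel"
    using Z unfolding compact_pmm_def by auto
  obtain n and B :: "nat \<Rightarrow> 'b set" where B: "\<forall>i. B i \<in> sets borel"
    "\<forall>i j. i \<noteq> j \<longrightarrow> B i \<inter> B j = {}" "\<forall>y. \<exists>i<n. y \<in> B i"
    "\<forall>i y y'. y \<in> B i \<longrightarrow> y' \<in> B i \<longrightarrow> dist y y' \<le> \<delta>"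
    using compact_partition[OF cY d] by blast
  interpret G: glue \<mu>X \<mu>Y \<mu>Z \<pi>1 \<pi>2 e1 e2 \<delta> n B
    by (rule glue.intro[OF cX cY cZ pX sX pY sY pZ sZ e1 e2 d pi1 pi2]) (use B in blast)+
  show ?thesis
  proof (intro bexI[OF _ G.\<gamma>_in])
    show "dis_norm p G.\<gamma> \<le> pfactor p e2 * dis_norm p \<pi>1 + pfactor p e1 * dis_norm p \<pi>2 + 4 * \<delta>"
    proof (cases "p = \<top>")
      case True
      then show ?thesis using G.infinite_bound d unfolding pfactor_def by simp
    next
      case False
      show ?thesis by (rule G.finite_bound[OF False p])
    qed
  qed
qed


theorem theorem3p10:
  fixes \<mu>X :: "'a::metric_space measure" and \<mu>Y :: "'b::metric_space measure"
    and \<mu>Z :: "'c::metric_space measure"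
    and e1 e2 :: real and p :: ennreal
  assumes "0 \<le> e1" and "0 \<le> e2" and "1 \<le> p"
    and "compact_pmm \<mu>X" and "compact_pmm \<mu>Y" and "compact_pmm \<mu>Z"
  shows "sPGW (e1 + e2 + e1 * e2) (e1 + e2 + e1 * e2) p \<mu>X \<mu>Z
           \<le> pfactor p e2 * sPGW e1 e2 p \<mu>X \<mu>Y + pfactor p e1 * sPGW e1 e2 p \<mu>Y \<mu>Z"
proof -
  note e1 = assms(1) and e2 = assms(2) and p = assms(3) and X = assms(4) and Y = assms(5) and Z = assms(6)
  have cX: "compact (UNIV::'a set)" using X unfolding compact_pmm_def by auto
  have cY: "compact (UNIV::'b set)" using Y unfolding compact_pmm_def by auto
  have cZ: "compact (UNIV::'c set)" using Z unfolding compact_pmm_def by auto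
  define S0 where "S0 = dis_norm p ` sS (e1 + e2 + e1 * e2) (e1 + e2 + e1 * e2) \<mu>X \<mu>Z"
  define S1 where "S1 = dis_norm p ` sS e1 e2 \<mu>X \<mu>Y"
  define S2 where "S2 = dis_norm p ` sS e1 e2 \<mu>Y \<mu>Z"
  define f1 where "f1 = pfactor p e1"
  define f2 where "f2 = pfactor p e2"
  have f1: "0 < f1" unfolding f1_def pfactor_def using e1 by auto
  have f2: "0 < f2" unfolding f2_def pfactor_def using e2 by auto
  have ne1: "S1 \<noteq> {}" unfolding S1_def using prod_in_sS[OF X Y e1 e2] by blast
  have ne2: "S2 \<noteq> {}" unfolding S2_def using prod_in_sS[OF Y Z e1 e2] by blast
  have bdd0: "bdd_below S0" unfolding S0_def
    by (rule bdd_belowI[of _ 0]) (auto simp: sS_def intro!: dis_norm_nonneg[OF cX cZ])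
  have key: "Inf S0 \<le> f2 * a + f1 * b + 4 * \<delta>" if a: "a \<in> S1" and b: "b \<in> S2" and d: "0 < \<delta>" for a b \<delta>
  proof -
    obtain \<pi>1 where \<pi>1: "\<pi>1 \<in> sS e1 e2 \<mu>X \<mu>Y" "a = dis_norm p \<pi>1" using a unfolding S1_def by blast
    obtain \<pi>2 where \<pi>2: "\<pi>2 \<in> sS e1 e2 \<mu>Y \<mu>Z" "b = dis_norm p \<pi>2" using b unfolding S2_def by blast
    obtain \<gamma> where \<gamma>: "\<gamma> \<in> sS (e1 + e2 + e1 * e2) (e1 + e2 + e1 * e2) \<mu>X \<mu>Z"
      "dis_norm p \<gamma> \<le> pfactor p e2 * dis_norm p \<pi>1 + pfactor p e1 * dis_norm p \<pi>2 + 4 * \<delta>"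
      using glue_exists[OF e1 e2 p X Y Z \<pi>1(1) \<pi>2(1) d] by blast
    have "Inf S0 \<le> dis_norm p \<gamma>" unfolding S0_def
      by (rule cInf_lower) (use \<gamma>(1) bdd0 S0_def in auto)
    then show ?thesis using \<gamma>(2) \<pi>1(2) \<pi>2(2) unfolding f1_def f2_def by simp
  qed
  have "Inf S0 \<le> f2 * Inf S1 + f1 * Inf S2"
  proof (rule field_le_epsilon)
    fix \<epsilon> :: real assume \<epsilon>: "0 < \<epsilon>"
    define \<eta> where "\<eta> = \<epsilon> / (f1 + f2 + 4)"
    have \<eta>: "0 < \<eta>" unfolding \<eta>_def using \<epsilon> f1 f2 by simp
    obtain a where a: "a \<in> S1" "a < Inf S1 + \<eta>" using cInf_lessD[OF ne1, of "Inf S1 + \<eta>"] \<eta> by auto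
    obtain b where b: "b \<in> S2" "b < Inf S2 + \<eta>" using cInf_lessD[OF ne2, of "Inf S2 + \<eta>"] \<eta> by auto
    have "Inf S0 \<le> f2 * a + f1 * b + 4 * \<eta>" by (rule key[OF a(1) b(1) \<eta>])
    also have "\<dots> \<le> f2 * (Inf S1 + \<eta>) + f1 * (Inf S2 + \<eta>) + 4 * \<eta>"
      using a b f1 f2 by (intro add_mono mult_left_mono) auto
    also have "\<dots> = f2 * Inf S1 + f1 * Inf S2 + (f1 + f2 + 4) * \<eta>" by (simp add: algebra_simps)
    also have "(f1 + f2 + 4) * \<eta> = \<epsilon>" unfolding \<eta>_def using f1 f2 by simp
    finally show "Inf S0 \<le> f2 * Inf S1 + f1 * Inf S2 + \<epsilon>" .
  qed
  then show ?thesis unfolding sPGW_def S0_def S1_def S2_def f1_def f2_def .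
qed


end
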